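(* Let $|V(x)|\lesssim(1+|x|)^{-19-\epsilon}$ for some $\epsilon>0$ and suppose zero is the second kind resonance of $H=\Delta^2+V$, with $S_2A^2_{-3,1}S_2$ the leading coefficient in the expansion $(M^\pm(\lambda))^{-1}=\lambda^{-3}S_2A^2_{-3,1}S_2+\dots$. Let $$K_{t,4}(x,y)=\int_0^\infty\chi(\lambda)\sin(t\lambda^2)\lambda^{-2}[G_0vS_2A^2_{-3,1}S_2vG_0](x,y)\,d\lambda.$$ Then $\sup_{x,y\in\mathbb{R}^3}|K_{t,4}(x,y)|\lesssim|t|^{1/2}$.
   Context: $U=\operatorname{sign}V$ ($U=1$ where $V=0$), $v=|V|^{1/2}$; $G_0$ is the integral operator with kernel $-\frac{|x-y|}{8\pi}$; $P=\|V\|_{L^1}^{-1}v\langle v,\cdot\rangle$; $S_2$ is the zero-energy projection defined by: $T=U+vG_0v$, $Q=I-P$, $S_1$ the Riesz projection onto $\ker(QTQ)$ in $QL^2$, $T_1=S_1TPTS_1-\frac{\|V\|_{L^1}}{3(8\pi)^2}S_1vG_1vS_1$ ($G_1$ has kernel $|x-y|^2$), and $S_2$ the Riesz projection onto $\ker T_1$; in particular $S_2v=0$. $A^2_{-3,1}$ is a $\lambda$-independent absolutely bounded operator on $L^2$. $\chi$ is a smooth even cutoff equal to $1$ near $0$ and supported in $|\lambda|\le2\lambda_0$. *)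

theory Defs
  imports "HOL-Analysis.Analysis"
begin

type_synonym pt = "real^3"

text \<open>Real square-integrable functions on R^3 (representatives, not classes).\<close>
definition L2 :: "(pt \<Rightarrow> real) set" where
  "L2 = {f. f \<in> borel_measurable lborel \<and> integrable lborel (\<lambda>x. (f x)^2)}"

definition ip :: "(pt \<Rightarrow> real) \<Rightarrow> (pt \<Rightarrow> real) \<Rightarrow> real" where
  "ip f g = (\<integral>x. f x * g x \<partial>lborel)"

definition L2norm :: "(pt \<Rightarrow> real) \<Rightarrow> real" where
  "L2norm f = sqrt (\<integral>x. (f x)^2 \<partial>lborel)"

definition vfun :: "(pt \<Rightarrow> real) \<Rightarrow> pt \<Rightarrow> real" where
  "vfun V x = sqrt \<bar>V x\<bar>"

definition Ufun :: "(pt \<Rightarrow> real) \<Rightarrow> pt \<Rightarrow> real" where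
  "Ufun V x = (if V x < 0 then -1 else 1)"

definition G0 :: "pt \<Rightarrow> pt \<Rightarrow> real" where
  "G0 x y = - norm (x - y) / (8 * pi)"

definition G1 :: "pt \<Rightarrow> pt \<Rightarrow> real" where
  "G1 x y = (norm (x - y))^2"

definition L1norm :: "(pt \<Rightarrow> real) \<Rightarrow> real" where
  "L1norm V = (\<integral>x. \<bar>V x\<bar> \<partial>lborel)"

definition Pop :: "(pt \<Rightarrow> real) \<Rightarrow> (pt \<Rightarrow> real) \<Rightarrow> pt \<Rightarrow> real" where
  "Pop V f = (\<lambda>x. vfun V x * ip (vfun V) f / L1norm V)"

definition Qop :: "(pt \<Rightarrow> real) \<Rightarrow> (pt \<Rightarrow> real) \<Rightarrow> pt \<Rightarrow> real" where
  "Qop V f = (\<lambda>x. f x - Pop V f x)"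

definition Top :: "(pt \<Rightarrow> real) \<Rightarrow> (pt \<Rightarrow> real) \<Rightarrow> pt \<Rightarrow> real" where
  "Top V f = (\<lambda>x. Ufun V x * f x + vfun V x * (\<integral>y. G0 x y * vfun V y * f y \<partial>lborel))"

definition vG1v :: "(pt \<Rightarrow> real) \<Rightarrow> (pt \<Rightarrow> real) \<Rightarrow> pt \<Rightarrow> real" where
  "vG1v V f = (\<lambda>x. vfun V x * (\<integral>y. G1 x y * vfun V y * f y \<partial>lborel))"

text \<open>Range of S_1: ker(QTQ) inside QL^2.\<close>
definition kerQTQ :: "(pt \<Rightarrow> real) \<Rightarrow> (pt \<Rightarrow> real) set" where
  "kerQTQ V = {f \<in> L2. (AE x in lborel. Qop V f x = f x) \<and>
                  (AE x in lborel. Qop V (Top V (Qop V f)) x = 0)}"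

text \<open>Range of S_2: ker T_1 inside S_1 L^2, where
  T_1 = S_1 T P T S_1 - ||V||_1/(3(8 pi)^2) S_1 v G_1 v S_1.
  For f in S_1 L^2 (so S_1 f = f) and S_1 the orthogonal projection onto kerQTQ,
  T_1 f = 0 iff T P T f - c vG_1v f is orthogonal to kerQTQ.\<close>
definition kerT1 :: "(pt \<Rightarrow> real) \<Rightarrow> (pt \<Rightarrow> real) set" where
  "kerT1 V = {f \<in> kerQTQ V. \<forall>g \<in> kerQTQ V.
      ip g (Top V (Pop V (Top V f)))
      - L1norm V / (3 * (8 * pi)^2) * ip g (vG1v V f) = 0}"

definition orthproj :: "(pt \<Rightarrow> real) set \<Rightarrow> (pt \<Rightarrow> real) \<Rightarrow> pt \<Rightarrow> real" where
  "orthproj X h = (SOME g. g \<in> X \<and> (\<forall>k \<in> X. ip (\<lambda>x. h x - g x) k = 0))"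

definition S2 :: "(pt \<Rightarrow> real) \<Rightarrow> (pt \<Rightarrow> real) \<Rightarrow> pt \<Rightarrow> real" where
  "S2 V = orthproj (kerT1 V)"

definition abs_bounded :: "(pt \<Rightarrow> pt \<Rightarrow> complex) \<Rightarrow> bool" where
  "abs_bounded a \<longleftrightarrow> (\<lambda>(x, y). a x y) \<in> borel_measurable (lborel \<Otimes>\<^sub>M lborel) \<and>
     (\<exists>C. \<forall>f \<in> L2. \<forall>g \<in> L2.
        (\<integral>\<^sup>+ x. (\<integral>\<^sup>+ y. ennreal (norm (a x y) * \<bar>f y\<bar> * \<bar>g x\<bar>) \<partial>lborel) \<partial>lborel)
          \<le> ennreal (C * L2norm f * L2norm g))"

definition Aop :: "(pt \<Rightarrow> pt \<Rightarrow> complex) \<Rightarrow> (pt \<Rightarrow> real) \<Rightarrow> pt \<Rightarrow> complex" where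
  "Aop a f = (\<lambda>x. \<integral>y. a x y * complex_of_real (f y) \<partial>lborel)"

text \<open>Kernel of G_0 v S_2 A S_2 v G_0 at (x,y).\<close>
definition leadKer :: "(pt \<Rightarrow> real) \<Rightarrow> (pt \<Rightarrow> pt \<Rightarrow> complex) \<Rightarrow> pt \<Rightarrow> pt \<Rightarrow> complex" where
  "leadKer V a x y = (\<integral>z. complex_of_real (S2 V (\<lambda>w. G0 x w * vfun V w) z)
                         * Aop a (S2 V (\<lambda>w. vfun V w * G0 w y)) z \<partial>lborel)"

definition Kt4 :: "(pt \<Rightarrow> real) \<Rightarrow> (pt \<Rightarrow> pt \<Rightarrow> complex) \<Rightarrow> (real \<Rightarrow> real)
                   \<Rightarrow> real \<Rightarrow> pt \<Rightarrow> pt \<Rightarrow> complex" where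
  "Kt4 V a chi t x y = set_lebesgue_integral lborel {0<..}
      (\<lambda>l. complex_of_real (chi l * sin (t * l^2) / l^2) * leadKer V a x y)"

end

theory Submission
  imports Defs "HOL-Probability.Sinc_Integral"
begin


lemma L2_meas[measurable_dest]: "f \<in> L2 \<Longrightarrow> f \<in> borel_measurable lborel"
  by (simp add: L2_def)

lemma L2_sq: "f \<in> L2 \<Longrightarrow> integrable lborel (\<lambda>x. (f x)^2)"
  by (simp add: L2_def)

lemma L2I: "f \<in> borel_measurable lborel \<Longrightarrow> integrable lborel (\<lambda>x. (f x)^2) \<Longrightarrow> f \<in> L2"
  by (simp add: L2_def)

lemma L2_prod_int: assumes "f \<in> L2" "g \<in> L2"
  shows "integrable lborel (\<lambda>x. f x * g x)"
proof (rule Bochner_Integration.integrable_bound[of _ "\<lambda>x. (f x)^2 + (g x)^2"])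
  show "integrable lborel (\<lambda>x. (f x)\<^sup>2 + (g x)\<^sup>2)" using assms by (simp add: L2_sq)
  show "(\<lambda>x. f x * g x) \<in> borel_measurable lborel" using assms by measurable
  show "AE x in lborel. norm (f x * g x) \<le> norm ((f x)\<^sup>2 + (g x)\<^sup>2)"
  proof (rule AE_I2)
    fix x
    have "0 \<le> (\<bar>f x\<bar> - \<bar>g x\<bar>)^2" by simp
    hence "2*\<bar>f x\<bar>*\<bar>g x\<bar> \<le> (f x)^2 + (g x)^2" by (simp add: power2_eq_square algebra_simps)
    hence "\<bar>f x\<bar>*\<bar>g x\<bar> \<le> (f x)^2 + (g x)^2"
      using mult_nonneg_nonneg[OF abs_ge_zero abs_ge_zero, of "f x" "g x"] by linarith
    moreover have "0 \<le> (f x)^2 + (g x)^2" by simp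
    ultimately show "norm (f x * g x) \<le> norm ((f x)\<^sup>2 + (g x)\<^sup>2)"
      by (simp add: abs_mult)
  qed
qed

lemma L2_zero[simp]: "(\<lambda>x. 0) \<in> L2" by (simp add: L2_def)

lemma L2_add: assumes "f \<in> L2" "g \<in> L2" shows "(\<lambda>x. f x + g x) \<in> L2"
proof (rule L2I)
  show "(\<lambda>x. f x + g x) \<in> borel_measurable lborel" using assms by measurable
  have "integrable lborel (\<lambda>x. (f x)^2 + 2 * (f x * g x) + (g x)^2)"
    using assms L2_prod_int L2_sq by auto
  moreover have "(\<lambda>x. (f x)^2 + 2 * (f x * g x) + (g x)^2) = (\<lambda>x. (f x + g x)\<^sup>2)"
    by (auto simp: power2_sum algebra_simps)
  ultimately show "integrable lborel (\<lambda>x. (f x + g x)\<^sup>2)" by simp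
qed

lemma L2_cmult: assumes "f \<in> L2" shows "(\<lambda>x. c * f x) \<in> L2"
proof -
  have [measurable]: "f \<in> borel_measurable lborel" using assms by (simp add: L2_def)
  show ?thesis using assms by (auto intro!: L2I simp: power_mult_distrib L2_sq)
qed

lemma L2_minus: assumes "f \<in> L2" shows "(\<lambda>x. - f x) \<in> L2"
  using L2_cmult[OF assms, of "-1"] by simp

lemma L2_diff: assumes "f \<in> L2" "g \<in> L2" shows "(\<lambda>x. f x - g x) \<in> L2"
  using L2_add[OF assms(1) L2_minus[OF assms(2)]] by simp

lemma L2_lin: assumes "f \<in> L2" "g \<in> L2" shows "(\<lambda>x. f x + c * g x) \<in> L2"
  using L2_add[OF assms(1) L2_cmult[OF assms(2)]] by simp

lemma ip_sym: "ip f g = ip g f" by (simp add: ip_def mult.commute)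

lemma ip_add1: assumes "f \<in> L2" "g \<in> L2" "k \<in> L2"
  shows "ip (\<lambda>x. f x + g x) k = ip f k + ip g k"
proof -
  have "ip (\<lambda>x. f x + g x) k = (\<integral>x. f x * k x + g x * k x \<partial>lborel)"
    by (simp add: ip_def distrib_right)
  also have "\<dots> = ip f k + ip g k" using assms by (simp add: ip_def L2_prod_int)
  finally show ?thesis .
qed

lemma ip_cmult1: "ip (\<lambda>x. c * f x) k = c * ip f k"
  by (simp add: ip_def mult.assoc)

lemma ip_diff1: assumes "f \<in> L2" "g \<in> L2" "k \<in> L2"
  shows "ip (\<lambda>x. f x - g x) k = ip f k - ip g k"
  using ip_add1[OF assms(1) L2_minus[OF assms(2)] assms(3)] ip_cmult1[of "-1" g k] by simp

lemma ip_add2: assumes "f \<in> L2" "g \<in> L2" "k \<in> L2"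
  shows "ip k (\<lambda>x. f x + g x) = ip k f + ip k g"
  using ip_add1[OF assms] by (simp add: ip_sym)

lemma ip_diff2: assumes "f \<in> L2" "g \<in> L2" "k \<in> L2"
  shows "ip k (\<lambda>x. f x - g x) = ip k f - ip k g"
  using ip_diff1[OF assms] by (simp add: ip_sym)

lemma ip_cmult2: "ip k (\<lambda>x. c * f x) = c * ip k f"
  using ip_cmult1 by (simp add: ip_sym)

lemma ip_self_nonneg: "0 \<le> ip f f"
  by (simp add: ip_def)

lemma ip_self_sq: "ip f f = (\<integral>x. (f x)^2 \<partial>lborel)"
  by (simp add: ip_def power2_eq_square)

lemma L2norm_ip: "L2norm f = sqrt (ip f f)"
  by (simp add: L2norm_def ip_self_sq)

lemma L2norm_nonneg: "0 \<le> L2norm f" by (simp add: L2norm_def)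

lemma CS_quad:
  fixes F B G :: real
  assumes "\<And>s. 0 \<le> F - 2 * s * B + s^2 * G" "0 \<le> G"
  shows "B^2 \<le> F * G"
proof (cases "G = 0")
  case True
  have "B = 0"
  proof (rule ccontr)
    assume "B \<noteq> 0"
    have "0 \<le> F - 2 * ((F + 1) / (2*B)) * B" using assms(1)[of "(F+1)/(2*B)"] True by simp
    with \<open>B \<noteq> 0\<close> show False by (simp add: field_simps)
  qed
  thus ?thesis using True by simp
next
  case False
  hence "G > 0" using assms(2) by simp
  have "0 \<le> F - 2 * (B/G) * B + (B/G)^2 * G" by (rule assms(1))
  also have "\<dots> = F - B^2/G" using \<open>G>0\<close> by (simp add: field_simps power2_eq_square)
  finally show ?thesis using \<open>G>0\<close> by (simp add: field_simps)
qed

lemma ip_quad: assumes "f \<in> L2" "g \<in> L2"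
  shows "ip (\<lambda>x. f x - s * g x) (\<lambda>x. f x - s * g x) = ip f f - 2 * s * ip f g + s^2 * ip g g"
proof -
  have m: "(\<lambda>x. s * g x) \<in> L2" using assms L2_cmult by auto
  have "ip (\<lambda>x. f x - s * g x) (\<lambda>x. f x - s * g x)
      = ip f (\<lambda>x. f x - s * g x) - ip (\<lambda>x. s * g x) (\<lambda>x. f x - s * g x)"
    using assms m L2_diff by (simp add: ip_diff1)
  also have "\<dots> = (ip f f - s * ip f g) - s * (ip g f - s * ip g g)"
    using assms m by (simp add: ip_diff2 ip_cmult1 ip_cmult2)
  finally show ?thesis by (simp add: ip_sym[of g f] power2_eq_square algebra_simps)
qed

lemma ip_CS: assumes "f \<in> L2" "g \<in> L2"
  shows "(ip f g)^2 \<le> ip f f * ip g g"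
  by (rule CS_quad) (use ip_quad[OF assms] ip_self_nonneg in \<open>metis\<close>)+

lemma ip_CS_abs: assumes "f \<in> L2" "g \<in> L2"
  shows "\<bar>ip f g\<bar> \<le> L2norm f * L2norm g"
proof -
  have "\<bar>ip f g\<bar> = sqrt ((ip f g)^2)" by simp
  also have "\<dots> \<le> sqrt (ip f f * ip g g)" using ip_CS[OF assms] by (rule real_sqrt_le_mono)
  finally show ?thesis by (simp add: L2norm_ip real_sqrt_mult)
qed

lemma L2norm_triangle: assumes "f \<in> L2" "g \<in> L2"
  shows "L2norm (\<lambda>x. f x + g x) \<le> L2norm f + L2norm g"
proof -
  have "ip (\<lambda>x. f x + g x) (\<lambda>x. f x + g x) = ip f f + 2 * ip f g + ip g g"
    using assms L2_add by (simp add: ip_add1 ip_add2 ip_sym[of g f])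
  also have "\<dots> \<le> ip f f + 2 * (L2norm f * L2norm g) + ip g g"
    using ip_CS_abs[OF assms] by linarith
  also have "\<dots> = (L2norm f + L2norm g)^2"
    by (simp add: L2norm_ip power2_sum ip_self_nonneg)
  finally have "sqrt (ip (\<lambda>x. f x + g x) (\<lambda>x. f x + g x)) \<le> sqrt ((L2norm f + L2norm g)^2)"
    by (rule real_sqrt_le_mono)
  thus ?thesis by (simp add: L2norm_ip[symmetric] L2norm_nonneg)
qed

lemma L2norm_cmult: "L2norm (\<lambda>x. c * f x) = \<bar>c\<bar> * L2norm f"
  by (simp add: L2norm_ip ip_cmult1 ip_cmult2 real_sqrt_mult mult.assoc[symmetric] power2_eq_square[symmetric])

lemma L2norm_zero_AE: assumes "f \<in> L2" "L2norm f = 0" shows "AE x in lborel. f x = 0"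
proof -
  have "(\<integral>x. (f x)^2 \<partial>lborel) = 0" using assms(2) by (simp add: L2norm_def)
  hence "AE x in lborel. (f x)^2 = 0"
    using integral_nonneg_eq_0_iff_AE[OF L2_sq[OF assms(1)]] by simp
  thus ?thesis by simp
qed

lemma ip_cong_AE: assumes "AE x in lborel. f x = g x" "f \<in> borel_measurable lborel"
  "g \<in> borel_measurable lborel" "k \<in> borel_measurable lborel" shows "ip f k = ip g k"
  unfolding ip_def using assms by (intro integral_cong_AE) auto


locale hsop =
  fixes w :: "pt \<Rightarrow> real" and k :: "pt \<Rightarrow> pt \<Rightarrow> real" and B :: "pt \<Rightarrow> real"
  assumes w_meas[measurable]: "w \<in> borel_measurable lborel"
    and k_meas[measurable]: "(\<lambda>(x, y). k x y) \<in> borel_measurable (lborel \<Otimes>\<^sub>M lborel)"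
    and k_L2: "\<And>x. k x \<in> L2"
    and k_bound: "\<And>x. ip (k x) (k x) \<le> B x"
    and B_int: "integrable lborel (\<lambda>x. (w x)^2 * B x)"
begin

definition "HS = (\<integral>x. (w x)^2 * B x \<partial>lborel)"

lemma ipk_meas: assumes "f \<in> L2"
  shows "(\<lambda>x. ip (k x) f) \<in> borel_measurable lborel"
proof -
  have [measurable]: "f \<in> borel_measurable lborel" using assms by (simp add: L2_def)
  have "(\<lambda>x. \<integral>y. k x y * f y \<partial>lborel) \<in> borel_measurable lborel"
    by (rule lborel.borel_measurable_lebesgue_integral) measurable
  thus ?thesis unfolding ip_def by measurable
qed

lemma KO_meas[measurable]: assumes "f \<in> L2"
  shows "(\<lambda>x. w x * ip (k x) f) \<in> borel_measurable lborel"
proof -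
  have [measurable]: "f \<in> borel_measurable lborel" using assms by (simp add: L2_def)
  have "(\<lambda>x. \<integral>y. k x y * f y \<partial>lborel) \<in> borel_measurable lborel"
    by (rule lborel.borel_measurable_lebesgue_integral) measurable
  thus ?thesis unfolding ip_def by measurable
qed

lemma KO_pt: assumes "f \<in> L2"
  shows "(w x * ip (k x) f)^2 \<le> (w x)^2 * B x * ip f f"
proof -
  have "(ip (k x) f)^2 \<le> ip (k x) (k x) * ip f f" by (rule ip_CS[OF k_L2 assms])
  also have "\<dots> \<le> B x * ip f f" using k_bound ip_self_nonneg by (intro mult_right_mono) auto
  finally have "(ip (k x) f)^2 \<le> B x * ip f f" .
  hence "(w x)^2 * (ip (k x) f)^2 \<le> (w x)^2 * (B x * ip f f)" by (intro mult_left_mono) auto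
  thus ?thesis by (simp add: power_mult_distrib mult.assoc)
qed

lemma KO_L2: assumes "f \<in> L2" shows "(\<lambda>x. w x * ip (k x) f) \<in> L2"
proof (rule L2I)
  show "(\<lambda>x. w x * ip (k x) f) \<in> borel_measurable lborel" using KO_meas[OF assms] .
  show "integrable lborel (\<lambda>x. (w x * ip (k x) f)\<^sup>2)"
  proof (rule Bochner_Integration.integrable_bound[of _ "\<lambda>x. (w x)^2 * B x * ip f f"])
    show "integrable lborel (\<lambda>x. (w x)\<^sup>2 * B x * ip f f)" using B_int by simp
    show "(\<lambda>x. (w x * ip (k x) f)\<^sup>2) \<in> borel_measurable lborel" using KO_meas[OF assms] by measurable
    show "AE x in lborel. norm ((w x * ip (k x) f)\<^sup>2) \<le> norm ((w x)\<^sup>2 * B x * ip f f)"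
      using KO_pt[OF assms] by (auto intro: order_trans[OF _ abs_ge_self])
  qed
qed

lemma HS_nonneg: "0 \<le> HS"
proof -
  have "0 \<le> (w x)^2 * B x" for x
    using k_bound[of x] ip_self_nonneg[of "k x"] by simp
  thus ?thesis unfolding HS_def by (simp add: integral_nonneg)
qed

lemma KO_ipbound: assumes "f \<in> L2"
  shows "ip (\<lambda>x. w x * ip (k x) f) (\<lambda>x. w x * ip (k x) f) \<le> HS * ip f f"
proof -
  have "ip (\<lambda>x. w x * ip (k x) f) (\<lambda>x. w x * ip (k x) f) = (\<integral>x. (w x * ip (k x) f)^2 \<partial>lborel)"
    by (simp add: ip_self_sq)
  also have "\<dots> \<le> (\<integral>x. (w x)^2 * B x * ip f f \<partial>lborel)"
    using KO_L2[OF assms] B_int KO_pt[OF assms] by (intro integral_mono) (auto simp: L2_sq)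
  also have "\<dots> = HS * ip f f" by (simp add: HS_def)
  finally show ?thesis .
qed

lemma KO_norm: assumes "f \<in> L2"
  shows "L2norm (\<lambda>x. w x * ip (k x) f) \<le> sqrt HS * L2norm f"
proof -
  have "sqrt (ip (\<lambda>x. w x * ip (k x) f) (\<lambda>x. w x * ip (k x) f)) \<le> sqrt (HS * ip f f)"
    using KO_ipbound[OF assms] by (rule real_sqrt_le_mono)
  thus ?thesis by (simp add: L2norm_ip real_sqrt_mult)
qed

lemma KO_lin: assumes "f \<in> L2" "g \<in> L2"
  shows "ip (k x) (\<lambda>y. f y + c * g y) = ip (k x) f + c * ip (k x) g"
  using assms k_L2 L2_cmult by (simp add: ip_add2 ip_cmult2)

lemma KO_diff: assumes "f \<in> L2" "g \<in> L2"
  shows "ip (k x) (\<lambda>y. f y - g y) = ip (k x) f - ip (k x) g"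
  using assms k_L2 by (simp add: ip_diff2)

end


definition Wt :: "pt \<Rightarrow> real" where
  "Wt x = (\<Prod>b\<in>Basis. inverse (1 + (x \<bullet> b)^2))"

lemma Wt_meas[measurable]: "Wt \<in> borel_measurable lborel"
  unfolding Wt_def by measurable

lemma Wt_nonneg: "0 \<le> Wt x" unfolding Wt_def by (auto intro: prod_nonneg)

lemma integrable_Wt: "integrable lborel Wt"
proof -
  have i1: "integrable lborel (\<lambda>t::real. inverse (1 + t^2))"
    using integrable_inverse_1_plus_square by (simp add: set_integrable_def einterval_eq_UNIV)
  have fin: "(\<integral>\<^sup>+t. ennreal (inverse (1 + t^2)) \<partial>lborel) < \<infinity>"
    using i1 by (simp add: integrable_iff_bounded)
  have e1: "(\<integral>\<^sup>+x. ennreal (Wt x) \<partial>lborel) = (\<integral>\<^sup>+x. (\<Prod>b\<in>Basis. ennreal (inverse (1 + (x \<bullet> b)^2))) \<partial>(lborel::pt measure))"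
    proof -
    have "ennreal (Wt x) = (\<Prod>b\<in>Basis. ennreal (inverse (1 + (x \<bullet> b)^2)))" for x
      unfolding Wt_def by (subst prod_ennreal) auto
    thus ?thesis by simp
  qed
  have e2: "(\<integral>\<^sup>+x. (\<Prod>b\<in>Basis. ennreal (inverse (1 + (x \<bullet> b)^2))) \<partial>(lborel :: pt measure))
      = (\<Prod>b\<in>(Basis :: pt set). (\<integral>\<^sup>+t. ennreal (inverse (1 + t^2)) \<partial>lborel))"
    by (rule nn_integral_lborel_prod) auto
  have e3: "(\<Prod>b\<in>(Basis :: pt set). (\<integral>\<^sup>+t. ennreal (inverse (1 + t^2)) \<partial>lborel)) < \<infinity>"
    using fin by (simp add: power_less_top_ennreal)
  have "(\<integral>\<^sup>+x. ennreal (Wt x) \<partial>lborel) < \<infinity>" unfolding e1 e2 by (rule e3)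
  thus ?thesis using Wt_nonneg by (intro integrableI_nonneg) auto
qed

lemma Wt_lower: "inverse ((1 + norm x)^6) \<le> Wt x"
proof -
  have "(\<Prod>b\<in>(Basis::pt set). 1 + (x \<bullet> b)^2) \<le> (\<Prod>b\<in>(Basis::pt set). (1 + norm x)^2)"
  proof (rule prod_mono)
    fix b :: pt assume "b \<in> Basis"
    hence "\<bar>x \<bullet> b\<bar> \<le> norm x" by (rule Basis_le_norm)
    hence "(x \<bullet> b)^2 \<le> (norm x)^2"
      by (metis abs_ge_zero power2_abs power_mono)
    thus "0 \<le> 1 + (x \<bullet> b)^2 \<and> 1 + (x \<bullet> b)^2 \<le> (1 + norm x)^2"
    proof -
      have "0 \<le> 2 * norm x" by simp
      thus ?thesis using \<open>(x \<bullet> b)^2 \<le> (norm x)^2\<close> norm_ge_zero[of x]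
        by (simp add: power2_sum del: norm_ge_zero)
    qed
  qed
  also have "\<dots> = (1 + norm x)^6" by simp
  finally have le: "(\<Prod>b\<in>(Basis::pt set). 1 + (x \<bullet> b)^2) \<le> (1 + norm x)^6" .
  have pos: "0 < (\<Prod>b\<in>(Basis::pt set). 1 + (x \<bullet> b)^2)"
    by (intro prod_pos) (simp add: add_pos_nonneg)
  have "inverse ((1 + norm x)^6) \<le> inverse (\<Prod>b\<in>(Basis::pt set). 1 + (x \<bullet> b)^2)"
    using le pos by (intro le_imp_inverse_le) auto
  also have "\<dots> = Wt x" unfolding Wt_def by (simp add: prod_inversef[symmetric] o_def)
  finally show ?thesis .
qed

lemma decay_to_Wt:
  fixes V :: "pt \<Rightarrow> real"
  assumes "\<exists>\<epsilon>>0. \<exists>C. \<forall>x. \<bar>V x\<bar> \<le> C * (1 + norm x) powr (-19 - \<epsilon>)"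
  shows "\<exists>C\<ge>0. \<forall>x. \<bar>V x\<bar> * (1 + norm x)^4 \<le> C * Wt x"
proof -
  obtain \<epsilon> C where e: "\<epsilon> > 0" and C: "\<And>x. \<bar>V x\<bar> \<le> C * (1 + norm x) powr (-19 - \<epsilon>)"
    using assms by blast
  have "\<bar>V x\<bar> * (1 + norm x)^4 \<le> max C 0 * Wt x" for x
  proof -
    have b1: "1 \<le> 1 + norm x" by simp
    have "(1 + norm x) powr (-19 - \<epsilon>) \<le> (1 + norm x) powr (-10)"
      using e b1 by (intro powr_mono) auto
    also have "\<dots> = inverse ((1 + norm x)^10)"
      using b1 by (simp add: powr_minus powr_realpow)
    finally have p: "(1 + norm x) powr (-19 - \<epsilon>) \<le> inverse ((1 + norm x)^10)" .
    have "\<bar>V x\<bar> \<le> max C 0 * inverse ((1 + norm x)^10)"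
    proof -
      have "\<bar>V x\<bar> \<le> C * (1 + norm x) powr (-19 - \<epsilon>)" by (rule C)
      also have "\<dots> \<le> max C 0 * (1 + norm x) powr (-19 - \<epsilon>)" by (intro mult_right_mono) auto
      also have "\<dots> \<le> max C 0 * inverse ((1 + norm x)^10)" using p by (intro mult_left_mono) auto
      finally show ?thesis .
    qed
    hence "\<bar>V x\<bar> * (1 + norm x)^4 \<le> max C 0 * inverse ((1 + norm x)^10) * (1 + norm x)^4"
      by (intro mult_right_mono) auto
    also have "\<dots> = max C 0 * inverse ((1 + norm x)^6)"
      using b1 by (simp add: field_simps power_add[symmetric] del: power_add)
        (simp add: eval_nat_numeral)
    also have "\<dots> \<le> max C 0 * Wt x" using Wt_lower by (intro mult_left_mono) auto
    finally show ?thesis .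
  qed
  thus ?thesis by (intro exI[of _ "max C 0"]) auto
qed

locale decayV =
  fixes V :: "pt \<Rightarrow> real" and CV :: real
  assumes Vmeas[measurable]: "V \<in> borel_measurable lborel"
    and CV_nonneg: "0 \<le> CV"
    and Vbound: "\<And>x. \<bar>V x\<bar> * (1 + norm x)^4 \<le> CV * Wt x"
begin

abbreviation "v \<equiv> vfun V"

lemma v_meas[measurable]: "v \<in> borel_measurable lborel"
  unfolding vfun_def by measurable

lemma v_nonneg: "0 \<le> v x" by (simp add: vfun_def)

lemma v_sq: "(v x)^2 = \<bar>V x\<bar>" by (simp add: vfun_def)

lemma int_V4: "integrable lborel (\<lambda>x. \<bar>V x\<bar> * (1 + norm x)^4)"
proof (rule Bochner_Integration.integrable_bound[of _ "\<lambda>x. CV * Wt x"])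
  show "integrable lborel (\<lambda>x. CV * Wt x)" using integrable_Wt by simp
  show "(\<lambda>x. \<bar>V x\<bar> * (1 + norm x)^4) \<in> borel_measurable lborel" by measurable
  show "AE x in lborel. norm (\<bar>V x\<bar> * (1 + norm x)^4) \<le> norm (CV * Wt x)"
    using Vbound CV_nonneg Wt_nonneg by (auto simp: abs_mult)
qed

lemma int_Vk: assumes "g \<in> borel_measurable lborel" "\<And>x. \<bar>g x\<bar> \<le> (1 + norm x)^4"
  shows "integrable lborel (\<lambda>x. \<bar>V x\<bar> * g x)"
proof (rule Bochner_Integration.integrable_bound[OF int_V4])
  show "(\<lambda>x. \<bar>V x\<bar> * g x) \<in> borel_measurable lborel" using assms by measurable
  show "AE x in lborel. norm (\<bar>V x\<bar> * g x) \<le> norm (\<bar>V x\<bar> * (1 + norm x)^4)"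
    using assms(2) by (auto simp: abs_mult intro!: mult_left_mono)
qed

lemma L2_vg: assumes "g \<in> borel_measurable lborel" "\<And>x. (g x)^2 \<le> (1 + norm x)^4"
  shows "(\<lambda>x. g x * v x) \<in> L2"
proof (rule L2I)
  show "(\<lambda>x. g x * v x) \<in> borel_measurable lborel" using assms by measurable
  have "integrable lborel (\<lambda>x. \<bar>V x\<bar> * (g x)^2)"
    using assms by (intro int_Vk) auto
  thus "integrable lborel (\<lambda>x. (g x * v x)^2)"
    by (simp add: power_mult_distrib v_sq mult.commute)
qed

lemma pow_le14: assumes "k \<le> 2" shows "(norm x ^ k)^2 \<le> (1 + norm (x::pt))^4"
proof -
  have "norm x ^ k \<le> (1 + norm x)^2"
  proof -
    have "norm x ^ k \<le> (1 + norm x) ^ k" by (intro power_mono) auto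
    also have "\<dots> \<le> (1 + norm x)^2" using assms by (intro power_increasing) auto
    finally show ?thesis .
  qed
  hence "(norm x ^ k)^2 \<le> ((1 + norm x)^2)^2" by (intro power_mono) auto
  thus ?thesis by simp
qed

lemma L2_v: "v \<in> L2"
  using L2_vg[of "\<lambda>x. 1"] pow_le14[of 0] by simp

lemma L2_nv: "(\<lambda>x. norm x * v x) \<in> L2"
  using L2_vg[of "\<lambda>x. norm x"] pow_le14[of 1] by simp

lemma L2_n2v: "(\<lambda>x. (norm x)^2 * v x) \<in> L2"
  using L2_vg[of "\<lambda>x. (norm x)^2"] pow_le14[of 2] by simp

lemma L2_cv: "(\<lambda>x. (x \<bullet> b) * v x) \<in> L2" if "b \<in> Basis"
proof (rule L2_vg)
  show "(\<lambda>x. x \<bullet> b) \<in> borel_measurable lborel" by measurable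
  fix x :: pt
  have "\<bar>x \<bullet> b\<bar> \<le> norm x" using that by (rule Basis_le_norm)
  hence "(x \<bullet> b)^2 \<le> (norm x ^ 1)^2" by (metis abs_ge_zero power2_abs power_mono power_one_right)
  also have "\<dots> \<le> (1 + norm x)^4" by (rule pow_le14) simp
  finally show "(x \<bullet> b)^2 \<le> (1 + norm x)^4" .
qed

lemma ip_vv: "ip v v = L1norm V"
  by (simp add: ip_self_sq v_sq L1norm_def)

lemma L1norm_nonneg: "0 \<le> L1norm V" by (simp add: L1norm_def)

end


lemma norm_diff_le_prod: "norm (x - y) \<le> (1 + norm x) * (1 + norm (y::pt))"
proof -
  have "norm (x - y) \<le> norm x + norm y" by (rule norm_triangle_ineq4)
  also have "\<dots> \<le> (1 + norm x) * (1 + norm y)" by (simp add: algebra_simps)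
  finally show ?thesis .
qed

lemma G0_bound: "\<bar>G0 x y\<bar> \<le> (1 + norm x)^2 * (1 + norm y)^2"
proof -
  have "\<bar>G0 x y\<bar> = norm (x - y) / (8 * pi)" by (simp add: G0_def)
  also have "\<dots> \<le> norm (x - y)"
  proof -
    have "norm (x - y) * 1 \<le> norm (x - y) * (8 * pi)" using pi_gt3 by (intro mult_left_mono) auto
    thus ?thesis using pi_gt3 by (simp add: divide_le_eq)
  qed
  also have "\<dots> \<le> (1 + norm x) * (1 + norm y)" by (rule norm_diff_le_prod)
  also have "\<dots> \<le> (1 + norm x)^2 * (1 + norm y)^2"
  proof -
    have "(1 + norm x) * 1 \<le> (1 + norm x) * (1 + norm x)" "(1 + norm y) * 1 \<le> (1 + norm y) * (1 + norm y)"
      by (intro mult_left_mono; simp)+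
    hence "(1 + norm x) \<le> (1 + norm x)^2" "(1 + norm y) \<le> (1 + norm y)^2"
      by (simp_all add: power2_eq_square)
    thus ?thesis by (intro mult_mono) auto
  qed
  finally show ?thesis .
qed

lemma G1_bound: "\<bar>G1 x y\<bar> \<le> (1 + norm x)^2 * (1 + norm y)^2"
proof -
  have "\<bar>G1 x y\<bar> = (norm (x - y))^2" by (simp add: G1_def)
  also have "\<dots> \<le> ((1 + norm x) * (1 + norm y))^2"
    by (intro power_mono norm_diff_le_prod) auto
  finally show ?thesis by (simp add: power_mult_distrib)
qed

lemma G0_meas[measurable]: "(\<lambda>(x, y). G0 x y) \<in> borel_measurable (lborel \<Otimes>\<^sub>M lborel)"
  unfolding G0_def by measurable

lemma G1_meas[measurable]: "(\<lambda>(x, y). G1 x y) \<in> borel_measurable (lborel \<Otimes>\<^sub>M lborel)"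
  unfolding G1_def by measurable

context decayV
begin

definition "I4 = (\<integral>x. \<bar>V x\<bar> * (1 + norm x)^4 \<partial>lborel)"

lemma HS_kernel:
  assumes gm[measurable]: "(\<lambda>(x, y). g x y) \<in> borel_measurable (lborel \<Otimes>\<^sub>M lborel)"
    and gb: "\<And>x y. \<bar>g x y\<bar> \<le> (1 + norm x)^2 * (1 + norm y)^2"
  shows "hsop v (\<lambda>x y. g x y * v y) (\<lambda>x. (1 + norm x)^4 * I4)"
proof
  show "v \<in> borel_measurable lborel" by measurable
  show "(\<lambda>(x, y). g x y * v y) \<in> borel_measurable (lborel \<Otimes>\<^sub>M lborel)" by measurable
  have sq: "(g x y * v y)^2 \<le> (1 + norm x)^4 * (\<bar>V y\<bar> * (1 + norm y)^4)" for x y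
  proof -
    have "(g x y)^2 \<le> ((1 + norm x)^2 * (1 + norm y)^2)^2"
      using gb[of x y] by (metis abs_ge_zero power2_abs power_mono)
    hence "(g x y)^2 * \<bar>V y\<bar> \<le> ((1 + norm x)^2 * (1 + norm y)^2)^2 * \<bar>V y\<bar>"
      by (intro mult_right_mono) auto
    thus ?thesis by (simp add: power_mult_distrib v_sq power_mult[symmetric] mult_ac)
  qed
  have gx[measurable]: "(\<lambda>y. g x y) \<in> borel_measurable lborel" for x
    using measurable_Pair2[OF gm[unfolded split_beta'], of x] by simp
  show L2x: "(\<lambda>y. g x y * v y) \<in> L2" for x
  proof (rule L2I)
    show "(\<lambda>y. g x y * v y) \<in> borel_measurable lborel" by measurable
    show "integrable lborel (\<lambda>y. (g x y * v y)\<^sup>2)"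
    proof (rule Bochner_Integration.integrable_bound[of _ "\<lambda>y. (1 + norm x)^4 * (\<bar>V y\<bar> * (1 + norm y)^4)"])
      show "integrable lborel (\<lambda>y. (1 + norm x)^4 * (\<bar>V y\<bar> * (1 + norm y)^4))"
        using int_V4 by simp
      show "(\<lambda>y. (g x y * v y)\<^sup>2) \<in> borel_measurable lborel" by measurable
      show "AE y in lborel. norm ((g x y * v y)\<^sup>2) \<le> norm ((1 + norm x)^4 * (\<bar>V y\<bar> * (1 + norm y)^4))"
        using sq by (auto intro: order_trans[OF _ abs_ge_self])
    qed
  qed
  show "ip (\<lambda>y. g x y * v y) (\<lambda>y. g x y * v y) \<le> (1 + norm x)^4 * I4" for x
  proof -
    have "ip (\<lambda>y. g x y * v y) (\<lambda>y. g x y * v y) = (\<integral>y. (g x y * v y)^2 \<partial>lborel)"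
      by (simp add: ip_self_sq)
    also have "\<dots> \<le> (\<integral>y. (1 + norm x)^4 * (\<bar>V y\<bar> * (1 + norm y)^4) \<partial>lborel)"
      using L2_sq[OF L2x] int_V4 sq by (intro integral_mono) auto
    also have "\<dots> = (1 + norm x)^4 * I4" by (simp add: I4_def)
    finally show ?thesis .
  qed
  show "integrable lborel (\<lambda>x. (v x)^2 * ((1 + norm x)^4 * I4))"
    using int_V4 by (simp add: v_sq mult.assoc[symmetric])
qed

lemma hs0: "hsop v (\<lambda>x y. G0 x y * v y) (\<lambda>x. (1 + norm x)^4 * I4)"
  by (rule HS_kernel[OF G0_meas G0_bound])

lemma hs1: "hsop v (\<lambda>x y. G1 x y * v y) (\<lambda>x. (1 + norm x)^4 * I4)"
  by (rule HS_kernel[OF G1_meas G1_bound])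

end


context decayV
begin

sublocale H0: hsop v "\<lambda>x y. G0 x y * v y" "\<lambda>x. (1 + norm x)^4 * I4" by (rule hs0)
sublocale H1: hsop v "\<lambda>x y. G1 x y * v y" "\<lambda>x. (1 + norm x)^4 * I4" by (rule hs1)

abbreviation "U \<equiv> Ufun V"
abbreviation "T \<equiv> Top V"
abbreviation "L \<equiv> L1norm V"

lemma U_sq: "U x * U x = 1" by (simp add: Ufun_def)
lemma U_abs: "\<bar>U x\<bar> = 1" by (simp add: Ufun_def)
lemma U_meas[measurable]: "U \<in> borel_measurable lborel" unfolding Ufun_def by measurable

lemma Top_eq: "T f x = U x * f x + v x * ip (\<lambda>y. G0 x y * v y) f"
  by (simp add: Top_def ip_def)

lemma Top_fun: "T f = (\<lambda>x. U x * f x + v x * ip (\<lambda>y. G0 x y * v y) f)"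
  using Top_eq by auto

lemma vG1v_fun: "vG1v V f = (\<lambda>x. v x * ip (\<lambda>y. G1 x y * v y) f)"
  by (simp add: vG1v_def ip_def)

lemma Uf_L2: assumes "f \<in> L2" shows "(\<lambda>x. U x * f x) \<in> L2"
proof -
  have [measurable]: "f \<in> borel_measurable lborel" using assms by (simp add: L2_def)
  have "(\<lambda>x. (U x * f x)^2) = (\<lambda>x. (f x)^2)"
    by (auto simp: power_mult_distrib Ufun_def)
  thus ?thesis using assms by (intro L2I) (auto simp: L2_sq)
qed

lemma Uf_norm: "L2norm (\<lambda>x. U x * f x) = L2norm f"
proof -
  have "(\<lambda>x. (U x * f x)^2) = (\<lambda>x. (f x)^2)"
    by (auto simp: power_mult_distrib Ufun_def)
  thus ?thesis by (simp add: L2norm_def)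
qed

lemma T_L2: assumes "f \<in> L2" shows "T f \<in> L2"
  unfolding Top_fun using assms by (intro L2_add Uf_L2 H0.KO_L2)

lemma vG1v_L2: assumes "f \<in> L2" shows "vG1v V f \<in> L2"
  unfolding vG1v_fun using assms by (rule H1.KO_L2)

lemma T_norm: assumes "f \<in> L2" shows "L2norm (T f) \<le> (1 + sqrt H0.HS) * L2norm f"
proof -
  have "L2norm (T f) \<le> L2norm (\<lambda>x. U x * f x) + L2norm (\<lambda>x. v x * ip (\<lambda>y. G0 x y * v y) f)"
    unfolding Top_fun using assms by (intro L2norm_triangle Uf_L2 H0.KO_L2)
  also have "\<dots> \<le> L2norm f + sqrt H0.HS * L2norm f"
    using H0.KO_norm[OF assms] by (simp add: Uf_norm)
  finally show ?thesis by (simp add: algebra_simps)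
qed

lemma vG1v_norm: assumes "f \<in> L2" shows "L2norm (vG1v V f) \<le> sqrt H1.HS * L2norm f"
  unfolding vG1v_fun using H1.KO_norm[OF assms] by simp

lemma T_lin: assumes "f \<in> L2" "g \<in> L2"
  shows "T (\<lambda>x. f x + c * g x) x = T f x + c * T g x"
  unfolding Top_eq using H0.KO_lin[OF assms, of x c] by (simp add: algebra_simps)

lemma T_diff: assumes "f \<in> L2" "g \<in> L2"
  shows "T (\<lambda>x. f x - g x) x = T f x - T g x"
proof -
  have "ip (\<lambda>y. G0 x y * v y) (\<lambda>y. f y - g y) = ip (\<lambda>y. G0 x y * v y) f - ip (\<lambda>y. G0 x y * v y) g"
    by (rule H0.KO_diff[OF assms])
  thus ?thesis by (simp add: Top_eq right_diff_distrib)
qed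

lemma vG1v_lin: assumes "f \<in> L2" "g \<in> L2"
  shows "vG1v V (\<lambda>x. f x + c * g x) x = vG1v V f x + c * vG1v V g x"
  unfolding vG1v_fun using H1.KO_lin[OF assms, of x c] by (simp add: algebra_simps)

lemma vG1v_diff: assumes "f \<in> L2" "g \<in> L2"
  shows "vG1v V (\<lambda>x. f x - g x) x = vG1v V f x - vG1v V g x"
  unfolding vG1v_fun using H1.KO_diff[OF assms, of x] by (simp add: right_diff_distrib[symmetric])

lemma Pop_eq: "Pop V f x = v x * ip v f / L" by (simp add: Pop_def)

lemma Qop_eq: "Qop V f x = f x - v x * ip v f / L" by (simp add: Qop_def Pop_def)

lemma Qop_fix: "ip v f = 0 \<Longrightarrow> Qop V f = f"
  by (auto simp: Qop_eq)

lemma v_AE0: assumes "L = 0" shows "AE x in lborel. v x = 0"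
  using L2norm_zero_AE[OF L2_v] assms by (simp add: L2norm_ip ip_vv)

lemma kerQTQ_ipv: assumes "f \<in> kerQTQ V" shows "ip v f = 0"
proof -
  have fL2: "f \<in> L2" and AEQ: "AE x in lborel. Qop V f x = f x"
    using assms by (auto simp: kerQTQ_def)
  have [measurable]: "f \<in> borel_measurable lborel" using fL2 by (simp add: L2_def)
  show ?thesis
  proof (cases "L = 0")
    case True
    hence "ip v f = ip (\<lambda>x. 0) f" using v_AE0 by (intro ip_cong_AE) auto
    thus ?thesis by (simp add: ip_def)
  next
    case False
    let ?c = "ip v f / L"
    have "AE x in lborel. ?c * v x = 0" using AEQ by eventually_elim (auto simp: Qop_eq)
    hence "ip (\<lambda>x. ?c * v x) v = ip (\<lambda>x. 0) v" by (intro ip_cong_AE) auto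
    hence "?c * ip v v = 0" by (simp only: ip_cmult1) (simp add: ip_def)
    hence "?c = 0" using False by (simp add: ip_vv)
    thus ?thesis using False by simp
  qed
qed

lemma kerQTQ_char:
  "f \<in> kerQTQ V \<longleftrightarrow> f \<in> L2 \<and> ip v f = 0 \<and> (AE x in lborel. T f x = v x * (ip v (T f) / L))"
proof
  assume f: "f \<in> kerQTQ V"
  hence fL2: "f \<in> L2" and ipf: "ip v f = 0" using kerQTQ_ipv by (auto simp: kerQTQ_def)
  have "AE x in lborel. Qop V (T (Qop V f)) x = 0" using f by (simp add: kerQTQ_def)
  hence "AE x in lborel. T f x = v x * (ip v (T f) / L)"
    by (rule eventually_mono) (simp add: Qop_fix[OF ipf] Qop_eq)
  thus "f \<in> L2 \<and> ip v f = 0 \<and> (AE x in lborel. T f x = v x * (ip v (T f) / L))"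
    using fL2 ipf by simp
next
  assume A: "f \<in> L2 \<and> ip v f = 0 \<and> (AE x in lborel. T f x = v x * (ip v (T f) / L))"
  hence "AE x in lborel. Qop V (T (Qop V f)) x = 0"
    by (auto simp: Qop_fix Qop_eq)
  thus "f \<in> kerQTQ V" using A by (simp add: kerQTQ_def Qop_fix)
qed

lemma TPT_eq: assumes "f \<in> L2"
  shows "T (Pop V (T f)) x = (ip v (T f) / L) * T v x"
proof -
  have "Pop V (T f) = (\<lambda>x. (ip v (T f) / L) * v x)" by (auto simp: Pop_eq)
  hence "T (Pop V (T f)) x = U x * ((ip v (T f) / L) * v x) + v x * ip (\<lambda>y. G0 x y * v y) (\<lambda>x. (ip v (T f) / L) * v x)"
    by (simp add: Top_eq)
  also have "\<dots> = (ip v (T f) / L) * T v x" by (simp only: ip_cmult2) (simp add: Top_eq algebra_simps)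
  finally show ?thesis .
qed

definition "cc = L / (3 * (8 * pi)^2)"

lemma kerT1_char:
  "f \<in> kerT1 V \<longleftrightarrow> f \<in> kerQTQ V \<and>
     (\<forall>g \<in> kerQTQ V. (ip v (T f) / L) * ip g (T v) - cc * ip g (vG1v V f) = 0)"
proof -
  have "ip g (T (Pop V (T f))) = (ip v (T f) / L) * ip g (T v)" if "f \<in> L2" for g f
  proof -
    have "T (Pop V (T f)) = (\<lambda>x. (ip v (T f) / L) * T v x)" using TPT_eq[OF that] by auto
    thus ?thesis by (simp only: ip_cmult2)
  qed
  thus ?thesis unfolding kerT1_def cc_def by (auto simp: kerQTQ_def)
qed

end


lemma parallelogram:
  assumes h: "h \<in> L2" and p: "p \<in> L2" and q: "q \<in> L2"
  shows "ip (\<lambda>x. p x - q x) (\<lambda>x. p x - q x) =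
    2 * ip (\<lambda>x. h x - p x) (\<lambda>x. h x - p x) + 2 * ip (\<lambda>x. h x - q x) (\<lambda>x. h x - q x)
    - 4 * ip (\<lambda>x. h x - (p x + q x) / 2) (\<lambda>x. h x - (p x + q x) / 2)"
proof -
  have m: "(\<lambda>x. (p x + q x) / 2) \<in> L2"
    using L2_cmult[OF L2_add[OF p q], of "1/2"] by simp
  have i1: "integrable lborel (\<lambda>x. (h x - p x)^2)" using L2_sq L2_diff h p by blast
  have i2: "integrable lborel (\<lambda>x. (h x - q x)^2)" using L2_sq L2_diff h q by blast
  have i3: "integrable lborel (\<lambda>x. (h x - (p x + q x) / 2)^2)" using L2_sq L2_diff[OF h m] by blast
  have pw: "(p x - q x)^2 = 2 * (h x - p x)^2 + 2 * (h x - q x)^2 - 4 * (h x - (p x + q x) / 2)^2" for x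
    by (simp add: power2_eq_square field_simps)
  have "ip (\<lambda>x. p x - q x) (\<lambda>x. p x - q x) = (\<integral>x. 2 * (h x - p x)^2 + 2 * (h x - q x)^2 - 4 * (h x - (p x + q x) / 2)^2 \<partial>lborel)"
    by (simp add: ip_self_sq pw)
  also have "\<dots> = 2 * (\<integral>x. (h x - p x)^2 \<partial>lborel) + 2 * (\<integral>x. (h x - q x)^2 \<partial>lborel)
      - 4 * (\<integral>x. (h x - (p x + q x) / 2)^2 \<partial>lborel)"
    using i1 i2 i3 by simp
  finally show ?thesis by (simp add: ip_self_sq)
qed

lemma proj_exists:
  assumes XL2: "X \<subseteq> L2" and X0: "(\<lambda>x. 0) \<in> X"
    and Xlin: "\<And>f g c. f \<in> X \<Longrightarrow> g \<in> X \<Longrightarrow> (\<lambda>x. f x + c * g x) \<in> X"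
    and Xcomp: "\<And>f. (\<And>n. f n \<in> X) \<Longrightarrow>
        (\<forall>e>0. \<exists>N. \<forall>m\<ge>N. \<forall>n\<ge>N. L2norm (\<lambda>x. f m x - f n x) < e) \<Longrightarrow>
        \<exists>F\<in>X. (\<lambda>n. L2norm (\<lambda>x. f n x - F x)) \<longlonglongrightarrow> 0"
    and h: "h \<in> L2"
  shows "\<exists>g\<in>X. \<forall>k\<in>X. ip (\<lambda>x. h x - g x) k = 0"
proof -
  define D where "D g = ip (\<lambda>x. h x - g x) (\<lambda>x. h x - g x)" for g
  define d where "d = Inf (D ` X)"
  have Dnn: "0 \<le> D g" for g by (simp add: D_def ip_self_nonneg)
  have bdd: "bdd_below (D ` X)" using Dnn by (intro bdd_belowI[of _ 0]) auto
  have ne: "D ` X \<noteq> {}" using X0 by auto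
  have dle: "d \<le> D g" if "g \<in> X" for g unfolding d_def using bdd that by (auto intro: cInf_lower)
  have "\<forall>n. \<exists>g\<in>X. D g < d + inverse (real (Suc n))"
  proof
    fix n
    have "Inf (D ` X) < d + inverse (real (Suc n))" unfolding d_def by simp
    from cInf_lessD[OF ne this] show "\<exists>g\<in>X. D g < d + inverse (real (Suc n))" by auto
  qed
  then obtain g where gX: "\<And>n. g n \<in> X" and gD: "\<And>n. D (g n) < d + inverse (real (Suc n))"
    by metis
  have gL2: "g n \<in> L2" for n using gX XL2 by auto
  have midX: "(\<lambda>x. (g n x + g m x) / 2) \<in> X" for n m
  proof -
    have "(\<lambda>x. g n x + (- 1) * g n x) \<in> X" using Xlin gX by blast
    have a: "(\<lambda>x. g m x + (- 1) * g n x) \<in> X" using Xlin gX by blast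
    have "(\<lambda>x. g n x + (1/2) * (g m x + (- 1) * g n x)) \<in> X" using Xlin[OF gX a] by blast
    moreover have "(\<lambda>x. g n x + (1/2) * (g m x + (- 1) * g n x)) = (\<lambda>x. (g n x + g m x) / 2)"
      by (auto simp: field_simps)
    ultimately show ?thesis by simp
  qed
  have cau: "ip (\<lambda>x. g n x - g m x) (\<lambda>x. g n x - g m x) < 2 * inverse (real (Suc n)) + 2 * inverse (real (Suc m))" for n m
  proof -
    have "ip (\<lambda>x. g n x - g m x) (\<lambda>x. g n x - g m x) = 2 * D (g n) + 2 * D (g m) - 4 * D (\<lambda>x. (g n x + g m x) / 2)"
      unfolding D_def by (rule parallelogram[OF h gL2 gL2])
    also have "\<dots> \<le> 2 * D (g n) + 2 * D (g m) - 4 * d" using dle[OF midX] by simp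
    also have "\<dots> < 2 * inverse (real (Suc n)) + 2 * inverse (real (Suc m))"
      using gD[of n] gD[of m] by simp
    finally show ?thesis .
  qed
  have "\<forall>e>0. \<exists>N. \<forall>m\<ge>N. \<forall>n\<ge>N. L2norm (\<lambda>x. g m x - g n x) < e"
  proof (intro allI impI)
    fix e :: real assume e: "e > 0"
    have "eventually (\<lambda>n. inverse (real (Suc n)) < e^2 / 4) sequentially"
      using e by (intro order_tendstoD(2)[OF LIMSEQ_inverse_real_of_nat]) simp
    then obtain N where N: "inverse (real (Suc N)) < e^2 / 4"
      unfolding eventually_sequentially by blast
    show "\<exists>N. \<forall>m\<ge>N. \<forall>n\<ge>N. L2norm (\<lambda>x. g m x - g n x) < e"
    proof (intro exI allI impI)
      fix m n assume mn: "N \<le> m" "N \<le> n"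
      have im: "inverse (real (Suc m)) \<le> inverse (real (Suc N))" using mn by (simp add: field_simps)
      have inn: "inverse (real (Suc n)) \<le> inverse (real (Suc N))" using mn by (simp add: field_simps)
      have "ip (\<lambda>x. g m x - g n x) (\<lambda>x. g m x - g n x) < e^2"
        using cau[of m n] im inn N by linarith
      hence "sqrt (ip (\<lambda>x. g m x - g n x) (\<lambda>x. g m x - g n x)) < sqrt (e^2)"
        by (rule real_sqrt_less_mono)
      thus "L2norm (\<lambda>x. g m x - g n x) < e" using e by (simp add: L2norm_ip)
    qed
  qed
  then obtain F where FX: "F \<in> X" and Fl: "(\<lambda>n. L2norm (\<lambda>x. g n x - F x)) \<longlonglongrightarrow> 0"
    using Xcomp[of g] gX by blast
  have FL2: "F \<in> L2" using FX XL2 by auto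
  have DF: "D F \<le> d"
  proof -
    have "sqrt (D F) \<le> sqrt (d + inverse (real (Suc n))) + L2norm (\<lambda>x. g n x - F x)" for n
    proof -
      have "sqrt (D F) = L2norm (\<lambda>x. (h x - g n x) + (g n x - F x))"
        by (simp add: D_def L2norm_ip)
      also have "\<dots> \<le> L2norm (\<lambda>x. h x - g n x) + L2norm (\<lambda>x. g n x - F x)"
        using h gL2 FL2 by (intro L2norm_triangle L2_diff)
      also have "L2norm (\<lambda>x. h x - g n x) = sqrt (D (g n))" by (simp add: D_def L2norm_ip)
      also have "\<dots> \<le> sqrt (d + inverse (real (Suc n)))" using gD[of n] by simp
      finally show ?thesis by simp
    qed
    moreover have "(\<lambda>n. sqrt (d + inverse (real (Suc n))) + L2norm (\<lambda>x. g n x - F x)) \<longlonglongrightarrow> sqrt (d + 0) + 0"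
      by (intro tendsto_intros LIMSEQ_inverse_real_of_nat Fl)
    ultimately have "sqrt (D F) \<le> sqrt (d + 0) + 0"
      by (intro LIMSEQ_le_const) auto
    thus ?thesis by simp
  qed
  have "ip (\<lambda>x. h x - F x) k = 0" if kX: "k \<in> X" for k
  proof -
    have kL2: "k \<in> L2" using kX XL2 by auto
    have hF: "(\<lambda>x. h x - F x) \<in> L2" using h FL2 by (rule L2_diff)
    have "0 \<le> 0 - 2 * s * ip (\<lambda>x. h x - F x) k + s^2 * ip k k" for s
    proof -
      have "(\<lambda>x. F x + s * k x) \<in> X" using Xlin FX kX by blast
      hence "d \<le> D (\<lambda>x. F x + s * k x)" by (rule dle)
      also have "D (\<lambda>x. F x + s * k x) = ip (\<lambda>x. (h x - F x) - s * k x) (\<lambda>x. (h x - F x) - s * k x)"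
        by (simp add: D_def algebra_simps)
      also have "\<dots> = D F - 2 * s * ip (\<lambda>x. h x - F x) k + s^2 * ip k k"
        using ip_quad[OF hF kL2, of s] by (simp add: D_def)
      finally show ?thesis using DF by simp
    qed
    hence "(ip (\<lambda>x. h x - F x) k)^2 \<le> 0 * ip k k"
      by (intro CS_quad) (auto simp: ip_self_nonneg)
    thus ?thesis by simp
  qed
  thus ?thesis using FX by blast
qed


lemma L2norm_swap: "L2norm (\<lambda>x. f x - g x) = L2norm (\<lambda>x. g x - f x)"
proof -
  have "(\<lambda>x. (f x - g x)^2) = (\<lambda>x. (g x - f x)^2)" by (auto simp: power2_commute)
  thus ?thesis by (simp add: L2norm_def)
qed

lemma eps_zero: fixes z K :: real
  assumes "0 \<le> K" "\<And>e. e > 0 \<Longrightarrow> \<bar>z\<bar> \<le> K * e" shows "z = 0"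
proof (rule ccontr)
  assume "z \<noteq> 0"
  hence "\<bar>z\<bar> / (K + 1) > 0" using assms(1) by simp
  hence "\<bar>z\<bar> \<le> K * (\<bar>z\<bar> / (K + 1))" by (rule assms(2))
  also have "\<dots> < \<bar>z\<bar>" using \<open>z \<noteq> 0\<close> assms(1) by (simp add: field_simps)
  finally show False by simp
qed

lemma cauchy_conv: fixes X :: "nat \<Rightarrow> real"
  assumes b: "\<And>m n. \<bar>X m - X n\<bar> \<le> K * dd m n" and K: "0 \<le> K"
    and c: "\<forall>e>0. \<exists>N. \<forall>m\<ge>N. \<forall>n\<ge>N. dd m n < e"
  shows "convergent X"
proof -
  have "Cauchy X"
  proof (rule metric_CauchyI)
    fix e :: real assume e: "e > 0"
    obtain N where N: "\<forall>m\<ge>N. \<forall>n\<ge>N. dd m n < e / (K + 1)" using c e K by (meson divide_pos_pos add_nonneg_pos zero_less_one)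
    show "\<exists>M. \<forall>m\<ge>M. \<forall>n\<ge>M. dist (X m) (X n) < e"
    proof (intro exI allI impI)
      fix m n assume "N \<le> m" "N \<le> n"
      hence "dd m n < e / (K + 1)" using N by blast
      hence "K * dd m n \<le> K * (e / (K + 1))" using K by (intro mult_left_mono) auto
      also have "\<dots> < e" using K e by (simp add: field_simps)
      finally show "dist (X m) (X n) < e" using b[of m n] by (simp add: dist_real_def)
    qed
  qed
  thus ?thesis by (simp add: Cauchy_convergent_iff)
qed

lemma cauchy_tail: fixes X :: "nat \<Rightarrow> real"
  assumes conv: "convergent X" and b: "\<And>m n. \<bar>X m - X n\<bar> \<le> K * dd m n" and K: "0 \<le> K"
    and N: "\<forall>m\<ge>N. \<forall>n\<ge>N. dd m n < e" and n: "n \<ge> N"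
  shows "\<bar>X n - lim X\<bar> \<le> K * e"
proof -
  have "(\<lambda>m. \<bar>X n - X m\<bar>) \<longlonglongrightarrow> \<bar>X n - lim X\<bar>"
    using conv by (intro tendsto_intros) (simp add: convergent_LIMSEQ_iff)
  moreover have "\<exists>M. \<forall>m\<ge>M. \<bar>X n - X m\<bar> \<le> K * e"
  proof (intro exI allI impI)
    fix m assume "N \<le> m"
    hence "dd n m < e" using N n by blast
    hence "K * dd n m \<le> K * e" using K by (intro mult_left_mono) auto
    thus "\<bar>X n - X m\<bar> \<le> K * e" using b[of n m] by linarith
  qed
  ultimately show ?thesis by (rule LIMSEQ_le_const2)
qed

context decayV
begin

abbreviation "aa f \<equiv> ip v (T f)"

lemma T_zero: "T (\<lambda>x. 0) = (\<lambda>x. 0)" by (auto simp: Top_eq ip_def)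
lemma vG1v_zero: "vG1v V (\<lambda>x. 0) = (\<lambda>x. 0)" by (auto simp: vG1v_fun ip_def)

lemma zero_kerT1: "(\<lambda>x. 0) \<in> kerT1 V"
  unfolding kerT1_char kerQTQ_char by (simp add: T_zero vG1v_zero ip_def)

lemma kerT1_L2: "f \<in> kerT1 V \<Longrightarrow> f \<in> L2"
  by (simp add: kerT1_char kerQTQ_char)

lemma kerQTQ_L2: "f \<in> kerQTQ V \<Longrightarrow> f \<in> L2"
  by (simp add: kerQTQ_char)

lemma kerT1_lin: assumes f: "f \<in> kerT1 V" and g: "g \<in> kerT1 V"
  shows "(\<lambda>x. f x + c * g x) \<in> kerT1 V"
proof -
  have fL: "f \<in> L2" and gL: "g \<in> L2" using f g kerT1_L2 by auto
  have TfL: "T f \<in> L2" and TgL: "T g \<in> L2" using fL gL T_L2 by auto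
  have hL: "(\<lambda>x. f x + c * g x) \<in> L2" using fL gL by (rule L2_lin)
  have Th: "T (\<lambda>x. f x + c * g x) = (\<lambda>x. T f x + c * T g x)" using T_lin[OF fL gL] by auto
  have ah: "aa (\<lambda>x. f x + c * g x) = aa f + c * aa g"
    unfolding Th using TfL TgL L2_v L2_cmult by (simp add: ip_add2 ip_cmult2)
  have Gh: "vG1v V (\<lambda>x. f x + c * g x) = (\<lambda>x. vG1v V f x + c * vG1v V g x)"
    using vG1v_lin[OF fL gL] by auto
  have ipv: "ip v (\<lambda>x. f x + c * g x) = 0"
    using f g fL gL L2_v L2_cmult by (simp add: ip_add2 ip_cmult2 kerT1_char kerQTQ_char)
  have AEf: "AE x in lborel. T f x = v x * (aa f / L)" using f by (simp add: kerT1_char kerQTQ_char)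
  have AEg: "AE x in lborel. T g x = v x * (aa g / L)" using g by (simp add: kerT1_char kerQTQ_char)
  have AEh': "AE x in lborel. T (\<lambda>x. f x + c * g x) x = v x * ((aa f + c * aa g) / L)"
    using AEf AEg by eventually_elim (simp add: Th add_divide_distrib algebra_simps)
  have AEh: "AE x in lborel. T (\<lambda>x. f x + c * g x) x = v x * (aa (\<lambda>x. f x + c * g x) / L)"
    using AEh' ah by simp
  have cond: "(aa (\<lambda>x. f x + c * g x) / L) * ip g' (T v) - cc * ip g' (vG1v V (\<lambda>x. f x + c * g x)) = 0"
    if g': "g' \<in> kerQTQ V" for g'
  proof -
    have g'L: "g' \<in> L2" using g' kerQTQ_L2 by auto
    have "ip g' (vG1v V (\<lambda>x. f x + c * g x)) = ip g' (vG1v V f) + c * ip g' (vG1v V g)"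
      unfolding Gh using vG1v_L2[OF fL] vG1v_L2[OF gL] g'L L2_cmult by (simp add: ip_add2 ip_cmult2)
    moreover have e1: "(aa f / L) * ip g' (T v) - cc * ip g' (vG1v V f) = 0"
      using f g' by (simp add: kerT1_char)
    moreover have e2: "(aa g / L) * ip g' (T v) - cc * ip g' (vG1v V g) = 0"
      using g g' by (simp add: kerT1_char)
    moreover have "((aa f + c * aa g) / L) * ip g' (T v) - cc * (ip g' (vG1v V f) + c * ip g' (vG1v V g))
        = ((aa f / L) * ip g' (T v) - cc * ip g' (vG1v V f)) + c * ((aa g / L) * ip g' (T v) - cc * ip g' (vG1v V g))"
      by (simp add: add_divide_distrib algebra_simps)
    ultimately show ?thesis unfolding ah by simp
  qed
  show ?thesis unfolding kerT1_char kerQTQ_char using hL ipv AEh cond by blast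
qed

end


context decayV
begin

lemma U_cancel: "U x * (U x * z) = z"
  using U_sq[of x] by (simp add: mult.assoc[symmetric])

lemma kerT1_complete:
  assumes fX: "\<And>n. f n \<in> kerT1 V"
    and cau: "\<forall>e>0. \<exists>N. \<forall>m\<ge>N. \<forall>n\<ge>N. L2norm (\<lambda>x. f m x - f n x) < e"
  shows "\<exists>F\<in>kerT1 V. (\<lambda>n. L2norm (\<lambda>x. f n x - F x)) \<longlonglongrightarrow> 0"
proof -
  have fL: "f n \<in> L2" for n by (rule kerT1_L2[OF fX])
  have fm[measurable]: "f n \<in> borel_measurable lborel" for n using fL by (simp add: L2_def)
  define dd where "dd m n = L2norm (\<lambda>x. f m x - f n x)" for m n
  define K0 where "K0 x = L2norm (\<lambda>y. G0 x y * v y)" for x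
  define w where "w n x = ip (\<lambda>y. G0 x y * v y) (f n)" for n x
  define \<beta> where "\<beta> n = aa (f n) / L" for n
  define Kb where "Kb = L2norm v * (1 + sqrt H0.HS) / \<bar>L\<bar>"
  have K0nn: "0 \<le> K0 x" for x by (simp add: K0_def L2norm_nonneg)
  have Kbnn: "0 \<le> Kb" unfolding Kb_def using H0.HS_nonneg by (simp add: L2norm_nonneg)
  have cau': "\<forall>e>0. \<exists>N. \<forall>m\<ge>N. \<forall>n\<ge>N. dd m n < e" using cau by (simp add: dd_def)
  have wb: "\<bar>w m x - w n x\<bar> \<le> K0 x * dd m n" for m n x
  proof -
    have "w m x - w n x = ip (\<lambda>y. G0 x y * v y) (\<lambda>y. f m y - f n y)"
      unfolding w_def by (rule H0.KO_diff[OF fL fL, symmetric])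
    also have "\<bar>\<dots>\<bar> \<le> K0 x * dd m n" unfolding K0_def dd_def
      by (intro ip_CS_abs H0.k_L2 L2_diff fL)
    finally show ?thesis .
  qed
  have bb: "\<bar>\<beta> m - \<beta> n\<bar> \<le> Kb * dd m n" for m n
  proof -
    have dL: "(\<lambda>x. f m x - f n x) \<in> L2" by (rule L2_diff[OF fL fL])
    have "T (\<lambda>x. f m x - f n x) = (\<lambda>x. T (f m) x - T (f n) x)" using T_diff[OF fL fL] by auto
    hence "aa (f m) - aa (f n) = ip v (T (\<lambda>x. f m x - f n x))"
      using T_L2[OF fL[of m]] T_L2[OF fL[of n]] L2_v fL[of m] fL[of n] by (simp add: ip_diff2)
    hence "\<bar>aa (f m) - aa (f n)\<bar> \<le> L2norm v * L2norm (T (\<lambda>x. f m x - f n x))"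
      using ip_CS_abs[OF L2_v T_L2[OF dL]] by simp
    also have "\<dots> \<le> L2norm v * ((1 + sqrt H0.HS) * dd m n)"
      unfolding dd_def by (intro mult_left_mono T_norm dL L2norm_nonneg)
    finally have A: "\<bar>aa (f m) - aa (f n)\<bar> \<le> L2norm v * (1 + sqrt H0.HS) * dd m n" by (simp add: mult.assoc)
    have "\<bar>\<beta> m - \<beta> n\<bar> = \<bar>aa (f m) - aa (f n)\<bar> / \<bar>L\<bar>"
      by (simp add: \<beta>_def diff_divide_distrib[symmetric] abs_divide)
    also have "\<dots> \<le> L2norm v * (1 + sqrt H0.HS) * dd m n / \<bar>L\<bar>"
      using A by (intro divide_right_mono) auto
    also have "\<dots> = Kb * dd m n" by (simp add: Kb_def)
    finally show ?thesis .
  qed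
  have wconv: "convergent (\<lambda>n. w n x)" for x by (rule cauchy_conv[OF wb K0nn cau'])
  have bconv: "convergent \<beta>" by (rule cauchy_conv[OF bb Kbnn cau'])
  define ws where "ws x = lim (\<lambda>n. w n x)" for x
  define bs where "bs = lim \<beta>"
  have wm[measurable]: "(\<lambda>x. w n x) \<in> borel_measurable lborel" for n
    unfolding w_def using H0.ipk_meas[OF fL] by simp
  have wsm[measurable]: "ws \<in> borel_measurable lborel"
  proof (rule borel_measurable_LIMSEQ_real)
    show "(\<lambda>n. w n x) \<longlonglongrightarrow> ws x" for x using wconv[of x] by (simp add: ws_def convergent_LIMSEQ_iff)
    show "(\<lambda>x. w n x) \<in> borel_measurable lborel" for n by measurable
  qed
  define F where "F x = U x * (v x * bs - v x * ws x)" for x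
  have Fm[measurable]: "F \<in> borel_measurable lborel" unfolding F_def by measurable
  have rep: "AE x in lborel. \<forall>n. f n x = U x * (v x * \<beta> n - v x * w n x)"
  proof (subst AE_all_countable, intro allI)
    fix n
    have "AE x in lborel. T (f n) x = v x * \<beta> n"
      using fX[of n] by (simp add: kerT1_char kerQTQ_char \<beta>_def)
    thus "AE x in lborel. f n x = U x * (v x * \<beta> n - v x * w n x)"
    proof (rule eventually_mono)
      fix x assume "T (f n) x = v x * \<beta> n"
      hence "U x * f n x = v x * \<beta> n - v x * w n x" by (simp add: Top_eq w_def algebra_simps)
      hence "U x * (U x * f n x) = U x * (v x * \<beta> n - v x * w n x)" by simp
      thus "f n x = U x * (v x * \<beta> n - v x * w n x)" by (simp add: U_cancel)
    qed
  qed
  define B0 :: "pt \<Rightarrow> real" where "B0 x = (1 + norm x)^4 * I4" for x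
  define C where "C = sqrt (2 * L * Kb^2 + 2 * H0.HS)"
  have Cnn: "0 \<le> C" unfolding C_def using L1norm_nonneg H0.HS_nonneg by simp
  have K0B: "(K0 x)^2 \<le> B0 x" for x
    using H0.k_bound[of x] by (simp add: K0_def L2norm_ip B0_def ip_self_nonneg)
  have est: "\<exists>N. \<forall>n\<ge>N. (\<lambda>x. f n x - F x) \<in> L2 \<and> L2norm (\<lambda>x. f n x - F x) \<le> C * e
      \<and> \<bar>\<beta> n - bs\<bar> \<le> Kb * e \<and> (\<forall>x. \<bar>w n x - ws x\<bar> \<le> K0 x * e)" if e: "e > 0" for e
  proof -
    obtain N where N: "\<forall>m\<ge>N. \<forall>n\<ge>N. dd m n < e" using cau' e by blast
    show ?thesis
    proof (intro exI allI impI)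
      fix n assume n: "N \<le> n"
      have b1: "\<bar>\<beta> n - bs\<bar> \<le> Kb * e" unfolding bs_def by (rule cauchy_tail[OF bconv bb Kbnn N n])
      have w1: "\<bar>w n x - ws x\<bar> \<le> K0 x * e" for x
        unfolding ws_def by (rule cauchy_tail[OF wconv wb K0nn N n])
      define R :: "pt \<Rightarrow> real" where "R x = (2 * (Kb * e)^2) * (v x)^2 + (2 * e^2) * ((v x)^2 * B0 x)" for x
      have Rint: "integrable lborel R" unfolding R_def B0_def
        using L2_sq[OF L2_v] H0.B_int by simp
      have pt: "(f n x - F x)^2 \<le> R x" if fx: "f n x = U x * (v x * \<beta> n - v x * w n x)" for x
      proof -
        have "(f n x - F x)^2 = (U x * (v x * (\<beta> n - bs) - v x * (w n x - ws x)))^2"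
          by (simp add: fx F_def algebra_simps)
        also have "\<dots> = (v x * (\<beta> n - bs) - v x * (w n x - ws x))^2"
          by (simp add: power_mult_distrib Ufun_def)
        also have "\<dots> \<le> 2 * (v x * (\<beta> n - bs))^2 + 2 * (v x * (w n x - ws x))^2"
        proof -
          have "0 \<le> (v x * (\<beta> n - bs) + v x * (w n x - ws x))^2" by simp
          thus ?thesis by (simp add: power2_eq_square algebra_simps)
        qed
        also have "\<dots> \<le> R x"
        proof -
          have "(\<beta> n - bs)^2 \<le> (Kb * e)^2" using power_mono[OF b1 abs_ge_zero, of 2] by simp
          hence t1: "(v x)^2 * (\<beta> n - bs)^2 \<le> (v x)^2 * (Kb * e)^2" by (intro mult_left_mono) auto
          have "(w n x - ws x)^2 \<le> (K0 x * e)^2" using power_mono[OF w1[of x] abs_ge_zero, of 2] by simp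
          also have "\<dots> = (K0 x)^2 * e^2" by (simp add: power_mult_distrib)
          also have "\<dots> \<le> B0 x * e^2" using K0B by (intro mult_right_mono) auto
          finally have "(v x)^2 * (w n x - ws x)^2 \<le> (v x)^2 * (B0 x * e^2)" by (intro mult_left_mono) auto
          with t1 show ?thesis by (simp add: R_def power_mult_distrib mult_ac)
        qed
        finally show ?thesis .
      qed
      have AEpt: "AE x in lborel. (f n x - F x)^2 \<le> R x"
        using rep by eventually_elim (rule pt, blast)
      have dL: "(\<lambda>x. f n x - F x) \<in> L2"
      proof (rule L2I)
        show "(\<lambda>x. f n x - F x) \<in> borel_measurable lborel" by measurable
        show "integrable lborel (\<lambda>x. (f n x - F x)\<^sup>2)"
          by (rule Bochner_Integration.integrable_bound[OF Rint]) (use AEpt in \<open>auto elim!: eventually_mono\<close>)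
      qed
      have "(\<integral>x. (f n x - F x)^2 \<partial>lborel) \<le> (\<integral>x. R x \<partial>lborel)"
        using dL Rint AEpt by (intro integral_mono_AE) (auto simp: L2_sq)
      also have "(\<integral>x. R x \<partial>lborel) = (C * e)^2"
      proof -
        have i1: "integrable lborel (\<lambda>x. (2 * (Kb * e)^2) * (v x)^2)" using L2_sq[OF L2_v] by simp
        have i2: "integrable lborel (\<lambda>x. (2 * e^2) * ((v x)^2 * B0 x))" using H0.B_int by (simp add: B0_def)
        have "(\<integral>x. R x \<partial>lborel) = (\<integral>x. (2 * (Kb * e)^2) * (v x)^2 \<partial>lborel) + (\<integral>x. (2 * e^2) * ((v x)^2 * B0 x) \<partial>lborel)"
          unfolding R_def by (rule Bochner_Integration.integral_add[OF i1 i2])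
        also have "\<dots> = 2 * (Kb * e)^2 * (\<integral>x. (v x)^2 \<partial>lborel) + 2 * e^2 * H0.HS"
          unfolding integral_mult_right_zero H0.HS_def B0_def by simp
        also have "(\<integral>x. (v x)^2 \<partial>lborel) = L" using ip_vv by (simp add: ip_self_sq)
        finally show ?thesis unfolding C_def using L1norm_nonneg H0.HS_nonneg Kbnn
          by (simp add: power_mult_distrib algebra_simps)
      qed
      finally have "sqrt (\<integral>x. (f n x - F x)^2 \<partial>lborel) \<le> sqrt ((C * e)^2)" by (rule real_sqrt_le_mono)
      hence "L2norm (\<lambda>x. f n x - F x) \<le> C * e" using Cnn e by (simp add: L2norm_def)
      thus "(\<lambda>x. f n x - F x) \<in> L2 \<and> L2norm (\<lambda>x. f n x - F x) \<le> C * e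
          \<and> \<bar>\<beta> n - bs\<bar> \<le> Kb * e \<and> (\<forall>x. \<bar>w n x - ws x\<bar> \<le> K0 x * e)"
        using dL b1 w1 by blast
    qed
  qed
  obtain N1 where N1: "(\<lambda>x. f N1 x - F x) \<in> L2" using est[of 1] by auto
  have FL: "F \<in> L2" using L2_diff[OF fL[of N1] N1] by simp
  have lim: "(\<lambda>n. L2norm (\<lambda>x. f n x - F x)) \<longlonglongrightarrow> 0"
  proof (rule LIMSEQ_I)
    fix r :: real assume r: "0 < r"
    have "r / (C + 1) > 0" using r Cnn by simp
    then obtain N where N: "\<And>n. n \<ge> N \<Longrightarrow> L2norm (\<lambda>x. f n x - F x) \<le> C * (r / (C + 1))"
      using est by blast
    show "\<exists>no. \<forall>n\<ge>no. norm (L2norm (\<lambda>x. f n x - F x) - 0) < r"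
    proof (intro exI allI impI)
      fix n assume "N \<le> n"
      hence "L2norm (\<lambda>x. f n x - F x) \<le> C * (r / (C + 1))" by (rule N)
      also have "\<dots> < r" using r Cnn by (simp add: field_simps)
      finally show "norm (L2norm (\<lambda>x. f n x - F x) - 0) < r" by (simp add: L2norm_nonneg)
    qed
  qed
  have ipvF: "ip v F = 0"
  proof (rule eps_zero[of "L2norm v * C"])
    show "0 \<le> L2norm v * C" using Cnn by (simp add: L2norm_nonneg)
    fix e :: real assume "e > 0"
    then obtain n where dL: "(\<lambda>x. f n x - F x) \<in> L2" and dn: "L2norm (\<lambda>x. f n x - F x) \<le> C * e"
      using est by blast
    have "ip v (\<lambda>x. f n x - F x) = ip v (f n) - ip v F" using fL FL L2_v by (simp add: ip_diff2)
    also have "ip v (f n) = 0" using fX[of n] by (simp add: kerT1_char kerQTQ_char)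
    finally have "\<bar>ip v F\<bar> = \<bar>ip v (\<lambda>x. f n x - F x)\<bar>" by simp
    also have "\<dots> \<le> L2norm v * L2norm (\<lambda>x. f n x - F x)" by (rule ip_CS_abs[OF L2_v dL])
    also have "\<dots> \<le> L2norm v * (C * e)" by (intro mult_left_mono dn L2norm_nonneg)
    finally show "\<bar>ip v F\<bar> \<le> L2norm v * C * e" by (simp add: mult.assoc)
  qed
  have ipkF: "ip (\<lambda>y. G0 x y * v y) F = ws x" for x
  proof -
    have "ip (\<lambda>y. G0 x y * v y) F - ws x = 0"
    proof (rule eps_zero[of "K0 x * (1 + C)"])
      show "0 \<le> K0 x * (1 + C)" using K0nn Cnn by simp
      fix e :: real assume "e > 0"
      then obtain n where dL: "(\<lambda>x. f n x - F x) \<in> L2" and dn: "L2norm (\<lambda>x. f n x - F x) \<le> C * e"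
        and wn: "\<bar>w n x - ws x\<bar> \<le> K0 x * e" using est by blast
      have "ip (\<lambda>y. G0 x y * v y) (\<lambda>x. f n x - F x) = w n x - ip (\<lambda>y. G0 x y * v y) F"
        unfolding w_def by (rule H0.KO_diff[OF fL FL])
      moreover have "\<bar>ip (\<lambda>y. G0 x y * v y) (\<lambda>x. f n x - F x)\<bar> \<le> K0 x * (C * e)"
      proof -
        have "\<bar>ip (\<lambda>y. G0 x y * v y) (\<lambda>x. f n x - F x)\<bar> \<le> K0 x * L2norm (\<lambda>x. f n x - F x)"
          unfolding K0_def by (rule ip_CS_abs[OF H0.k_L2 dL])
        also have "\<dots> \<le> K0 x * (C * e)" by (intro mult_left_mono dn K0nn)
        finally show ?thesis .
      qed
      ultimately have "\<bar>ip (\<lambda>y. G0 x y * v y) F - ws x\<bar> \<le> K0 x * e + K0 x * (C * e)"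
        using wn by linarith
      thus "\<bar>ip (\<lambda>y. G0 x y * v y) F - ws x\<bar> \<le> K0 x * (1 + C) * e" by (simp add: algebra_simps)
    qed
    thus ?thesis by simp
  qed
  have TF: "T F = (\<lambda>x. v x * bs)"
  proof
    fix x
    show "T F x = v x * bs" unfolding Top_eq ipkF unfolding F_def U_cancel by simp
  qed
  have bs0: "bs = 0" if "L = 0"
  proof -
    have "\<beta> = (\<lambda>n. 0)" using that by (auto simp: \<beta>_def)
    thus ?thesis by (simp add: bs_def limI)
  qed
  have aF: "aa F / L = bs"
  proof -
    have "aa F = bs * L" unfolding TF using ip_cmult2[of v bs v] by (simp add: ip_vv mult.commute)
    thus ?thesis using bs0 by (cases "L = 0") auto
  qed
  have FQ: "F \<in> kerQTQ V" unfolding kerQTQ_char using FL ipvF TF aF by simp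
  have cond: "(aa F / L) * ip g (T v) - cc * ip g (vG1v V F) = 0" if g: "g \<in> kerQTQ V" for g
  proof -
    have gL: "g \<in> L2" using g by (rule kerQTQ_L2)
    have ccnn: "0 \<le> cc" unfolding cc_def using L1norm_nonneg by simp
    let ?A = "ip g (T v)"
    show ?thesis unfolding aF
    proof (rule eps_zero[of "Kb * \<bar>?A\<bar> + cc * (L2norm g * (sqrt H1.HS * C))"])
      show "0 \<le> Kb * \<bar>?A\<bar> + cc * (L2norm g * (sqrt H1.HS * C))"
        using Kbnn ccnn Cnn H1.HS_nonneg by (simp add: L2norm_nonneg)
      fix e :: real assume "e > 0"
      then obtain n where dL: "(\<lambda>x. f n x - F x) \<in> L2" and dn: "L2norm (\<lambda>x. f n x - F x) \<le> C * e"
        and bn: "\<bar>\<beta> n - bs\<bar> \<le> Kb * e" using est by blast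
      have En: "\<beta> n * ?A - cc * ip g (vG1v V (f n)) = 0"
        using fX[of n] g by (simp add: kerT1_char \<beta>_def)
      have dG: "ip g (vG1v V (\<lambda>x. f n x - F x)) = ip g (vG1v V (f n)) - ip g (vG1v V F)"
      proof -
        have "vG1v V (\<lambda>x. f n x - F x) = (\<lambda>x. vG1v V (f n) x - vG1v V F x)"
          using vG1v_diff[OF fL FL] by auto
        thus ?thesis using vG1v_L2[OF fL] vG1v_L2[OF FL] gL by (simp add: ip_diff2)
      qed
      have "\<bar>ip g (vG1v V (\<lambda>x. f n x - F x))\<bar> \<le> L2norm g * L2norm (vG1v V (\<lambda>x. f n x - F x))"
        by (rule ip_CS_abs[OF gL vG1v_L2[OF dL]])
      also have "\<dots> \<le> L2norm g * (sqrt H1.HS * (C * e))"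
      proof (intro mult_left_mono L2norm_nonneg)
        have "L2norm (vG1v V (\<lambda>x. f n x - F x)) \<le> sqrt H1.HS * L2norm (\<lambda>x. f n x - F x)"
          by (rule vG1v_norm[OF dL])
        also have "\<dots> \<le> sqrt H1.HS * (C * e)" using dn H1.HS_nonneg by (intro mult_left_mono) auto
        finally show "L2norm (vG1v V (\<lambda>x. f n x - F x)) \<le> sqrt H1.HS * (C * e)" .
      qed
      finally have G: "\<bar>ip g (vG1v V (f n)) - ip g (vG1v V F)\<bar> \<le> L2norm g * (sqrt H1.HS * (C * e))"
        using dG by simp
      have "bs * ?A - cc * ip g (vG1v V F)
          = (bs - \<beta> n) * ?A + cc * (ip g (vG1v V (f n)) - ip g (vG1v V F))
            + (\<beta> n * ?A - cc * ip g (vG1v V (f n)))"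
        by (simp add: algebra_simps)
      hence eq: "bs * ?A - cc * ip g (vG1v V F)
          = (bs - \<beta> n) * ?A + cc * (ip g (vG1v V (f n)) - ip g (vG1v V F))"
        using En by simp
      have "\<bar>(bs - \<beta> n) * ?A\<bar> \<le> Kb * e * \<bar>?A\<bar>"
        using bn by (simp add: abs_mult abs_minus_commute mult_right_mono)
      moreover have "\<bar>cc * (ip g (vG1v V (f n)) - ip g (vG1v V F))\<bar> \<le> cc * (L2norm g * (sqrt H1.HS * (C * e)))"
        using G ccnn by (simp add: abs_mult mult_left_mono)
      ultimately have "\<bar>bs * ?A - cc * ip g (vG1v V F)\<bar> \<le> Kb * e * \<bar>?A\<bar> + cc * (L2norm g * (sqrt H1.HS * (C * e)))"
        unfolding eq by (rule order_trans[OF abs_triangle_ineq add_mono])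
      thus "\<bar>bs * ?A - cc * ip g (vG1v V F)\<bar> \<le> (Kb * \<bar>?A\<bar> + cc * (L2norm g * (sqrt H1.HS * C))) * e"
        by (simp add: algebra_simps)
    qed
  qed
  have "F \<in> kerT1 V" unfolding kerT1_char using FQ cond by blast
  thus ?thesis using lim by blast
qed

end


lemma integrable_prod_sep:
  fixes a b :: "pt \<Rightarrow> real"
  assumes ia: "integrable lborel a" and ib: "integrable lborel b"
  shows "integrable (lborel \<Otimes>\<^sub>M lborel) (\<lambda>(x, y). a x * b y)"
proof -
  have [measurable]: "a \<in> borel_measurable lborel" "b \<in> borel_measurable lborel"
    using ia ib by auto
  have "(\<integral>\<^sup>+z. ennreal (norm ((\<lambda>(x, y). a x * b y) z)) \<partial>(lborel \<Otimes>\<^sub>M lborel))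
      = (\<integral>\<^sup>+x. \<integral>\<^sup>+y. ennreal (norm (a x * b y)) \<partial>lborel \<partial>lborel)"
    by (subst lborel.nn_integral_fst[symmetric]) (auto simp: split_beta')
  also have "\<dots> = (\<integral>\<^sup>+x. ennreal (norm (a x)) * (\<integral>\<^sup>+y. ennreal (norm (b y)) \<partial>lborel) \<partial>lborel)"
    by (intro nn_integral_cong) (simp add: abs_mult ennreal_mult nn_integral_cmult)
  also have "\<dots> = (\<integral>\<^sup>+x. ennreal (norm (a x)) \<partial>lborel) * (\<integral>\<^sup>+y. ennreal (norm (b y)) \<partial>lborel)"
    by (simp add: nn_integral_multc)
  also have "\<dots> < \<infinity>" using ia ib by (simp add: integrable_iff_bounded ennreal_mult_less_top)
  finally show ?thesis by (intro integrableI_bounded) auto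
qed

lemma G0_sym: "G0 x y = G0 y x" by (simp add: G0_def norm_minus_commute)

context decayV
begin

lemma L2_pv: "(\<lambda>x. (1 + norm x)^2 * v x) \<in> L2"
  by (rule L2_vg) (auto simp: power_mult[symmetric])

lemma sym_G0: assumes f: "f \<in> L2" and h: "h \<in> L2"
  shows "ip f (\<lambda>x. v x * ip (\<lambda>y. G0 x y * v y) h) = ip h (\<lambda>x. v x * ip (\<lambda>y. G0 x y * v y) f)"
proof -
  have [measurable]: "f \<in> borel_measurable lborel" "h \<in> borel_measurable lborel"
    using f h by (auto simp: L2_def)
  define \<Phi> where "\<Phi> x y = f x * v x * G0 x y * v y * h y" for x y
  have ia: "integrable lborel (\<lambda>x. \<bar>f x\<bar> * ((1 + norm x)^2 * v x))"
  proof -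
    have "(\<lambda>x. \<bar>f x\<bar>) \<in> L2" using f by (intro L2I) (auto simp: L2_sq)
    thus ?thesis using L2_prod_int L2_pv by blast
  qed
  have ib: "integrable lborel (\<lambda>y. ((1 + norm y)^2 * v y) * \<bar>h y\<bar>)"
  proof -
    have "(\<lambda>x. \<bar>h x\<bar>) \<in> L2" using h by (intro L2I) (auto simp: L2_sq)
    thus ?thesis using L2_prod_int L2_pv by blast
  qed
  have int: "integrable (lborel \<Otimes>\<^sub>M lborel) (\<lambda>(x, y). \<Phi> x y)"
  proof (rule Bochner_Integration.integrable_bound[OF integrable_prod_sep[OF ia ib]])
    show "(\<lambda>(x, y). \<Phi> x y) \<in> borel_measurable (lborel \<Otimes>\<^sub>M lborel)"
      unfolding \<Phi>_def by measurable
    show "AE z in lborel \<Otimes>\<^sub>M lborel. norm ((\<lambda>(x, y). \<Phi> x y) z)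
        \<le> norm ((\<lambda>(x, y). \<bar>f x\<bar> * ((1 + norm x)^2 * v x) * (((1 + norm y)^2 * v y) * \<bar>h y\<bar>)) z)"
    proof (rule AE_I2, clarify)
      fix x y :: pt
      have "\<bar>\<Phi> x y\<bar> = (\<bar>f x\<bar> * v x) * \<bar>G0 x y\<bar> * (v y * \<bar>h y\<bar>)"
        by (simp add: \<Phi>_def abs_mult v_nonneg)
      also have "\<dots> \<le> (\<bar>f x\<bar> * v x) * ((1 + norm x)^2 * (1 + norm y)^2) * (v y * \<bar>h y\<bar>)"
        using G0_bound[of x y] by (intro mult_right_mono mult_left_mono) (auto simp: v_nonneg)
      finally show "norm (\<Phi> x y) \<le> norm (\<bar>f x\<bar> * ((1 + norm x)^2 * v x) * (((1 + norm y)^2 * v y) * \<bar>h y\<bar>))"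
        by (simp add: abs_mult v_nonneg mult_ac)
    qed
  qed
  have L: "ip f (\<lambda>x. v x * ip (\<lambda>y. G0 x y * v y) h) = (\<integral>x. \<integral>y. \<Phi> x y \<partial>lborel \<partial>lborel)"
    unfolding ip_def
  proof (rule Bochner_Integration.integral_cong[OF refl])
    fix a :: pt
    have "(\<integral>b. \<Phi> a b \<partial>lborel) = (\<integral>b. (f a * v a) * (G0 a b * v b * h b) \<partial>lborel)"
      unfolding \<Phi>_def by (rule Bochner_Integration.integral_cong[OF refl]) (simp add: mult_ac)
    also have "\<dots> = (f a * v a) * (\<integral>b. G0 a b * v b * h b \<partial>lborel)" by (rule integral_mult_right_zero)
    finally show "f a * (v a * (\<integral>b. G0 a b * v b * h b \<partial>lborel)) = (\<integral>b. \<Phi> a b \<partial>lborel)"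
      by (simp add: mult.assoc)
  qed
  have R: "ip h (\<lambda>x. v x * ip (\<lambda>y. G0 x y * v y) f) = (\<integral>y. \<integral>x. \<Phi> x y \<partial>lborel \<partial>lborel)"
    unfolding ip_def
  proof (rule Bochner_Integration.integral_cong[OF refl])
    fix a :: pt
    have "(\<integral>b. \<Phi> b a \<partial>lborel) = (\<integral>b. (h a * v a) * (G0 a b * v b * f b) \<partial>lborel)"
      unfolding \<Phi>_def by (rule Bochner_Integration.integral_cong[OF refl]) (simp add: G0_sym[of _ a] mult_ac)
    also have "\<dots> = (h a * v a) * (\<integral>b. G0 a b * v b * f b \<partial>lborel)" by (rule integral_mult_right_zero)
    finally show "h a * (v a * (\<integral>b. G0 a b * v b * f b \<partial>lborel)) = (\<integral>b. \<Phi> b a \<partial>lborel)"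
      by (simp add: mult.assoc)
  qed
  show ?thesis unfolding L R using lborel_pair.Fubini_integral[OF int] by simp
qed

lemma ip_Tv: assumes f: "f \<in> L2" shows "ip f (T v) = aa f"
proof -
  have Uv: "(\<lambda>x. U x * v x) \<in> L2" "(\<lambda>x. U x * f x) \<in> L2" using Uf_L2 L2_v f by auto
  have "ip f (T v) = ip f (\<lambda>x. U x * v x) + ip f (\<lambda>x. v x * ip (\<lambda>y. G0 x y * v y) v)"
    unfolding Top_fun using f Uv H0.KO_L2[OF L2_v] by (simp add: ip_add2)
  also have "ip f (\<lambda>x. U x * v x) = ip v (\<lambda>x. U x * f x)" by (simp add: ip_def mult_ac)
  also have "ip f (\<lambda>x. v x * ip (\<lambda>y. G0 x y * v y) v) = ip v (\<lambda>x. v x * ip (\<lambda>y. G0 x y * v y) f)"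
    by (rule sym_G0[OF f L2_v])
  also have "ip v (\<lambda>x. U x * f x) + ip v (\<lambda>x. v x * ip (\<lambda>y. G0 x y * v y) f) = aa f"
    unfolding Top_fun using L2_v Uv H0.KO_L2[OF f] by (simp add: ip_add2)
  finally show ?thesis .
qed

lemma ip_sum1: assumes "finite S" "\<And>b. b \<in> S \<Longrightarrow> \<phi> b \<in> L2" "k \<in> L2"
  shows "ip (\<lambda>y. \<Sum>b\<in>S. c b * \<phi> b y) k = (\<Sum>b\<in>S. c b * ip (\<phi> b) k)"
proof -
  have "ip (\<lambda>y. \<Sum>b\<in>S. c b * \<phi> b y) k = (\<integral>y. (\<Sum>b\<in>S. c b * (\<phi> b y * k y)) \<partial>lborel)"
    unfolding ip_def by (rule Bochner_Integration.integral_cong) (auto simp: sum_distrib_right mult.assoc)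
  also have "\<dots> = (\<Sum>b\<in>S. (\<integral>y. c b * (\<phi> b y * k y) \<partial>lborel))"
    using assms by (intro Bochner_Integration.integral_sum integrable_mult_right L2_prod_int) auto
  also have "\<dots> = (\<Sum>b\<in>S. c b * ip (\<phi> b) k)" by (simp add: ip_def)
  finally show ?thesis .
qed

lemma G1_decomp: "G1 x y * v y = (norm x)^2 * v y + (\<Sum>b\<in>Basis. (-2 * (x \<bullet> b)) * ((y \<bullet> b) * v y)) + (norm y)^2 * v y"
proof -
  have "G1 x y = (norm x)^2 - 2 * (x \<bullet> y) + (norm y)^2"
    by (simp add: G1_def power2_norm_eq_inner inner_diff_left inner_diff_right inner_commute)
  also have "x \<bullet> y = (\<Sum>b\<in>Basis. (x \<bullet> b) * (y \<bullet> b))" by (rule euclidean_inner)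
  finally have g: "G1 x y = (norm x)^2 - 2 * (\<Sum>b\<in>Basis. (x \<bullet> b) * (y \<bullet> b)) + (norm y)^2" .
  have s: "(\<Sum>b\<in>Basis. (-2 * (x \<bullet> b)) * ((y \<bullet> b) * v y)) = -2 * (\<Sum>b\<in>Basis. (x \<bullet> b) * (y \<bullet> b)) * v y"
    by (simp add: sum_distrib_left sum_distrib_right mult_ac)
  show ?thesis unfolding s g by (simp add: algebra_simps)
qed

definition "mm f b = ip (\<lambda>y. (y \<bullet> b) * v y) f"

lemma ip_G1: assumes f: "f \<in> L2" and ipv: "ip v f = 0"
  shows "ip (\<lambda>y. G1 x y * v y) f = (\<Sum>b\<in>Basis. (-2 * (x \<bullet> b)) * mm f b) + ip (\<lambda>y. (norm y)^2 * v y) f"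
proof -
  have s: "(\<lambda>y. \<Sum>b\<in>Basis. (-2 * (x \<bullet> b)) * ((y \<bullet> b) * v y)) \<in> L2"
  proof -
    have "(\<lambda>y. \<Sum>b\<in>B. (-2 * (x \<bullet> b)) * ((y \<bullet> b) * v y)) \<in> L2" if "B \<subseteq> Basis" "finite B" for B
      using that(2,1)
    proof (induction B rule: finite_induct)
      case empty thus ?case by simp
    next
      case (insert b B)
      thus ?case using L2_lin[OF insert(3)[OF _] L2_cv[of b], of "-2 * (x \<bullet> b)"]
        by (simp add: add.commute)
    qed
    thus ?thesis by simp
  qed
  have c1: "(\<lambda>y. (norm x)^2 * v y) \<in> L2" using L2_cmult[OF L2_v] .
  have "ip (\<lambda>y. G1 x y * v y) f = ip (\<lambda>y. ((norm x)^2 * v y + (\<Sum>b\<in>Basis. (-2 * (x \<bullet> b)) * ((y \<bullet> b) * v y))) + (norm y)^2 * v y) f"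
    by (simp only: G1_decomp)
  also have "\<dots> = ip (\<lambda>y. (norm x)^2 * v y) f + ip (\<lambda>y. \<Sum>b\<in>Basis. (-2 * (x \<bullet> b)) * ((y \<bullet> b) * v y)) f + ip (\<lambda>y. (norm y)^2 * v y) f"
    using c1 s f L2_n2v L2_add[OF c1 s] by (simp add: ip_add1)
  also have "ip (\<lambda>y. (norm x)^2 * v y) f = 0" by (simp add: ip_cmult1 ipv)
  also have "ip (\<lambda>y. \<Sum>b\<in>Basis. (-2 * (x \<bullet> b)) * ((y \<bullet> b) * v y)) f = (\<Sum>b\<in>Basis. (-2 * (x \<bullet> b)) * mm f b)"
    unfolding mm_def using L2_cv f by (intro ip_sum1) auto
  finally show ?thesis by simp
qed

lemma ip_vG1v: assumes f: "f \<in> L2" and ipv: "ip v f = 0"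
  shows "ip f (vG1v V f) = -2 * (\<Sum>b\<in>Basis. (mm f b)^2)"
proof -
  let ?M = "ip (\<lambda>y. (norm y)^2 * v y) f"
  have "vG1v V f = (\<lambda>x. ?M * v x + (\<Sum>b\<in>Basis. (-2 * mm f b) * ((x \<bullet> b) * v x)))"
    unfolding vG1v_fun ip_G1[OF f ipv] by (auto simp: algebra_simps sum_distrib_left)
  hence "ip f (vG1v V f) = ip (\<lambda>x. ?M * v x + (\<Sum>b\<in>Basis. (-2 * mm f b) * ((x \<bullet> b) * v x))) f"
    by (simp add: ip_sym)
  also have "\<dots> = ?M * ip v f + (\<Sum>b\<in>Basis. (-2 * mm f b) * mm f b)"
  proof -
    have s: "(\<lambda>x. \<Sum>b\<in>Basis. (-2 * mm f b) * ((x \<bullet> b) * v x)) \<in> L2"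
    proof -
      have "(\<lambda>y. \<Sum>b\<in>B. (-2 * mm f b) * ((y \<bullet> b) * v y)) \<in> L2" if "B \<subseteq> Basis" "finite B" for B
        using that(2,1)
      proof (induction B rule: finite_induct)
        case empty thus ?case by simp
      next
        case (insert b B)
        thus ?case using L2_lin[OF insert(3)[OF _] L2_cv[of b], of "-2 * mm f b"]
          by (simp add: add.commute)
      qed
      thus ?thesis by simp
    qed
    have "ip (\<lambda>x. ?M * v x + (\<Sum>b\<in>Basis. (-2 * mm f b) * ((x \<bullet> b) * v x))) f
        = ip (\<lambda>x. ?M * v x) f + ip (\<lambda>x. \<Sum>b\<in>Basis. (-2 * mm f b) * ((x \<bullet> b) * v x)) f"
      using s f L2_cmult[OF L2_v] by (simp add: ip_add1)
    also have "ip (\<lambda>x. \<Sum>b\<in>Basis. (-2 * mm f b) * ((x \<bullet> b) * v x)) f = (\<Sum>b\<in>Basis. (-2 * mm f b) * mm f b)"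
      unfolding mm_def using L2_cv f by (intro ip_sum1) auto
    finally show ?thesis by (simp add: ip_cmult1)
  qed
  finally show ?thesis using ipv by (simp add: sum_distrib_left power2_eq_square mult.assoc)
qed

lemma kerT1_orth: assumes f: "f \<in> kerT1 V" and b: "b \<in> Basis"
  shows "ip (\<lambda>y. (y \<bullet> b) * v y) f = 0"
proof (cases "L = 0")
  case True
  have fL: "f \<in> L2" using f by (rule kerT1_L2)
  have [measurable]: "f \<in> borel_measurable lborel" using fL by (simp add: L2_def)
  have "ip (\<lambda>y. (y \<bullet> b) * v y) f = ip (\<lambda>y. 0) f" using v_AE0[OF True] by (intro ip_cong_AE) auto
  thus ?thesis by (simp add: ip_def)
next
  case False
  hence Lp: "L > 0" using L1norm_nonneg by simp
  have fL: "f \<in> L2" using f by (rule kerT1_L2)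
  have fQ: "f \<in> kerQTQ V" using f by (simp add: kerT1_char)
  have ipv: "ip v f = 0" using fQ by (rule kerQTQ_ipv)
  have "(aa f / L) * ip f (T v) - cc * ip f (vG1v V f) = 0" using f fQ by (simp add: kerT1_char)
  hence E: "(aa f)^2 / L + 2 * cc * (\<Sum>b\<in>Basis. (mm f b)^2) = 0"
    by (simp add: ip_Tv[OF fL] ip_vG1v[OF fL ipv] power2_eq_square)
  have ccp: "cc > 0" unfolding cc_def using Lp by simp
  have t1: "0 \<le> (aa f)^2 / L" using Lp by simp
  have t2: "0 \<le> (\<Sum>b\<in>Basis. (mm f b)^2)" by (simp add: sum_nonneg)
  have "(\<Sum>b\<in>Basis. (mm f b)^2) = 0"
  proof -
    have "2 * cc * (\<Sum>b\<in>Basis. (mm f b)^2) \<le> 0" using E t1 by linarith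
    hence "(\<Sum>b\<in>Basis. (mm f b)^2) \<le> 0" using ccp by (simp add: mult_le_0_iff)
    thus ?thesis using t2 by simp
  qed
  hence "\<forall>b\<in>Basis. (mm f b)^2 = 0" by (simp add: sum_nonneg_eq_0_iff)
  thus ?thesis using b by (simp add: mm_def)
qed

end


lemma L2norm_mono:
  assumes pm: "\<phi> \<in> borel_measurable lborel" and \<psi>: "\<psi> \<in> L2" and b: "\<And>x. \<bar>\<phi> x\<bar> \<le> \<bar>\<psi> x\<bar>"
  shows "\<phi> \<in> L2" "L2norm \<phi> \<le> L2norm \<psi>"
proof -
  have sq: "(\<phi> x)^2 \<le> (\<psi> x)^2" for x using b[of x] by (simp add: abs_le_square_iff)
  show L: "\<phi> \<in> L2"
  proof (rule L2I[OF pm])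
    show "integrable lborel (\<lambda>x. (\<phi> x)\<^sup>2)"
      by (rule Bochner_Integration.integrable_bound[OF L2_sq[OF \<psi>]]) (use pm sq in auto)
  qed
  have "(\<integral>x. (\<phi> x)^2 \<partial>lborel) \<le> (\<integral>x. (\<psi> x)^2 \<partial>lborel)"
    using L2_sq[OF L] L2_sq[OF \<psi>] sq by (intro integral_mono) auto
  thus "L2norm \<phi> \<le> L2norm \<psi>" by (simp add: L2norm_def)
qed

context decayV
begin

definition "Mv = L2norm (\<lambda>w. norm w * v w)"

lemma S2_bound: "S2 V (\<lambda>w. G0 p w * v w) \<in> kerT1 V \<and> L2norm (S2 V (\<lambda>w. G0 p w * v w)) \<le> Mv"
proof -
  define h where "h = (\<lambda>w. G0 p w * v w)"
  have hL: "h \<in> L2" unfolding h_def by (rule H0.k_L2)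
  have ex: "\<exists>g. g \<in> kerT1 V \<and> (\<forall>k\<in>kerT1 V. ip (\<lambda>x. h x - g x) k = 0)"
    using proj_exists[of "kerT1 V" h] kerT1_L2 zero_kerT1 kerT1_lin kerT1_complete hL by blast
  define g where "g = S2 V h"
  have gp: "g \<in> kerT1 V \<and> (\<forall>k\<in>kerT1 V. ip (\<lambda>x. h x - g x) k = 0)"
    unfolding g_def S2_def orthproj_def by (rule someI_ex[OF ex])
  have gX: "g \<in> kerT1 V" using gp by blast
  have gL: "g \<in> L2" using gX by (rule kerT1_L2)
  have "ip (\<lambda>x. h x - g x) g = 0" using gp by blast
  hence hg: "ip h g = ip g g" using hL gL by (simp add: ip_diff1)
  define u where "u = inverse (norm p) *\<^sub>R p"
  have nu: "norm u \<le> 1" unfolding u_def by (cases "p = 0") auto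
  define ht where "ht w = (norm p - norm (p - w) - u \<bullet> w) / (8 * pi) * v w" for w
  have htm: "ht \<in> borel_measurable lborel" unfolding ht_def by measurable
  have htb: "\<bar>ht w\<bar> \<le> \<bar>norm w * v w\<bar>" for w
  proof -
    have a: "\<bar>norm p - norm (p - w)\<bar> \<le> norm w"
      using norm_triangle_ineq3[of p "p - w"] by simp
    have b: "\<bar>u \<bullet> w\<bar> \<le> norm w"
    proof -
      have "\<bar>u \<bullet> w\<bar> \<le> norm u * norm w" by (rule Cauchy_Schwarz_ineq2)
      also have "\<dots> \<le> 1 * norm w" using nu by (intro mult_right_mono) auto
      finally show ?thesis by simp
    qed
    have "\<bar>norm p - norm (p - w) - u \<bullet> w\<bar> \<le> 2 * norm w" using a b by linarith
    also have "2 * norm w \<le> norm w * (8 * pi)" using pi_gt3 by (simp add: mult.commute[of _ "norm w"] mult_left_mono)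
    finally have c: "\<bar>norm p - norm (p - w) - u \<bullet> w\<bar> / (8 * pi) \<le> norm w"
      using pi_gt3 by (simp add: divide_le_eq)
    have "\<bar>ht w\<bar> = \<bar>norm p - norm (p - w) - u \<bullet> w\<bar> / (8 * pi) * v w"
      by (simp add: ht_def abs_mult abs_divide v_nonneg)
    also have "\<dots> \<le> norm w * v w" using c v_nonneg by (intro mult_right_mono) auto
    finally show ?thesis by (simp add: v_nonneg)
  qed
  have htL: "ht \<in> L2" and htn: "L2norm ht \<le> Mv"
    using L2norm_mono[OF htm L2_nv htb] by (auto simp: Mv_def)
  have diff: "(\<lambda>w. h w - ht w) = (\<lambda>w. (- norm p / (8 * pi)) * v w + (\<Sum>b\<in>Basis. ((u \<bullet> b) / (8 * pi)) * ((w \<bullet> b) * v w)))"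
  proof
    fix w
    have "u \<bullet> w = (\<Sum>b\<in>Basis. (u \<bullet> b) * (w \<bullet> b))" by (rule euclidean_inner)
    have "(u \<bullet> w) / (8 * pi) * v w = (\<Sum>b\<in>Basis. (u \<bullet> b) * (w \<bullet> b)) / (8 * pi) * v w"
      using \<open>u \<bullet> w = _\<close> by simp
    also have "\<dots> = (\<Sum>b\<in>Basis. (u \<bullet> b) * (w \<bullet> b) / (8 * pi) * v w)"
      by (simp add: sum_divide_distrib sum_distrib_right)
    also have "\<dots> = (\<Sum>b\<in>Basis. ((u \<bullet> b) / (8 * pi)) * ((w \<bullet> b) * v w))"
      by (intro sum.cong refl) simp
    finally have "(\<Sum>b\<in>Basis. ((u \<bullet> b) / (8 * pi)) * ((w \<bullet> b) * v w)) = (u \<bullet> w) / (8 * pi) * v w" by simp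
    thus "h w - ht w = (- norm p / (8 * pi)) * v w + (\<Sum>b\<in>Basis. ((u \<bullet> b) / (8 * pi)) * ((w \<bullet> b) * v w))"
      by (simp add: h_def ht_def G0_def field_simps)
  qed
  have s: "(\<lambda>w. \<Sum>b\<in>Basis. ((u \<bullet> b) / (8 * pi)) * ((w \<bullet> b) * v w)) \<in> L2"
  proof -
    have "(\<lambda>y. \<Sum>b\<in>B. ((u \<bullet> b) / (8 * pi)) * ((y \<bullet> b) * v y)) \<in> L2" if "B \<subseteq> Basis" "finite B" for B
      using that(2,1)
    proof (induction B rule: finite_induct)
      case empty thus ?case by simp
    next
      case (insert b B)
      thus ?case using L2_lin[OF insert(3)[OF _] L2_cv[of b], of "(u \<bullet> b) / (8 * pi)"]
        by (simp add: add.commute)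
    qed
    thus ?thesis by simp
  qed
  have "ip (\<lambda>w. h w - ht w) g = (- norm p / (8 * pi)) * ip v g + (\<Sum>b\<in>Basis. ((u \<bullet> b) / (8 * pi)) * ip (\<lambda>w. (w \<bullet> b) * v w) g)"
    unfolding diff ip_add1[OF L2_cmult[OF L2_v] s gL] ip_cmult1
    by (subst ip_sum1) (use L2_cv gL in auto)
  also have "\<dots> = 0" using kerT1_orth[OF gX] kerQTQ_ipv gX by (simp add: kerT1_char)
  finally have "ip (\<lambda>w. h w - ht w) g = 0" .
  hence "ip h g = ip ht g" using hL htL gL by (simp add: ip_diff1)
  hence "ip g g = ip ht g" using hg by simp
  also have "\<dots> \<le> \<bar>ip ht g\<bar>" by simp
  also have "\<dots> \<le> L2norm ht * L2norm g" by (rule ip_CS_abs[OF htL gL])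
  also have "\<dots> \<le> Mv * L2norm g" using htn L2norm_nonneg by (intro mult_right_mono) auto
  finally have "(L2norm g)^2 \<le> Mv * L2norm g" by (simp add: L2norm_ip ip_self_nonneg)
  hence "L2norm g \<le> Mv" using L2norm_nonneg[of g]
    by (cases "L2norm g = 0") (auto simp: power2_eq_square Mv_def L2norm_nonneg)
  thus ?thesis using gX unfolding g_def h_def by simp
qed

end


lemma enn_integral_le:
  fixes \<phi> :: "'a \<Rightarrow> real"
  assumes "\<phi> \<in> borel_measurable M" "\<And>x. 0 \<le> \<phi> x"
  shows "ennreal (integral\<^sup>L M \<phi>) \<le> (\<integral>\<^sup>+x. ennreal (\<phi> x) \<partial>M)"
proof (cases "integrable M \<phi>")
  case True
  thus ?thesis using assms by (simp add: nn_integral_eq_integral)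
next
  case False
  thus ?thesis by (simp add: not_integrable_integral_eq)
qed

lemma lead_bound:
  assumes ab: "abs_bounded a"
  shows "\<exists>C\<ge>0. \<forall>f\<in>L2. \<forall>g\<in>L2. norm (\<integral>z. complex_of_real (g z) * Aop a f z \<partial>lborel) \<le> C * L2norm f * L2norm g"
proof -
  have am[measurable]: "(\<lambda>(x, y). a x y) \<in> borel_measurable (lborel \<Otimes>\<^sub>M lborel)"
    using ab by (simp add: abs_bounded_def)
  obtain C where C: "\<And>f g. f \<in> L2 \<Longrightarrow> g \<in> L2 \<Longrightarrow>
      (\<integral>\<^sup>+ x. (\<integral>\<^sup>+ y. ennreal (norm (a x y) * \<bar>f y\<bar> * \<bar>g x\<bar>) \<partial>lborel) \<partial>lborel) \<le> ennreal (C * L2norm f * L2norm g)"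
    using ab by (auto simp: abs_bounded_def)
  have azm[measurable]: "(\<lambda>y. a z y) \<in> borel_measurable lborel" for z
    using measurable_Pair2[OF am[unfolded split_beta'], of z] by simp
  have "norm (\<integral>z. complex_of_real (g z) * Aop a f z \<partial>lborel) \<le> max C 0 * L2norm f * L2norm g"
    if f: "f \<in> L2" and g: "g \<in> L2" for f g
  proof -
    have [measurable]: "f \<in> borel_measurable lborel" "g \<in> borel_measurable lborel"
      using f g by (auto simp: L2_def)
    have pt: "ennreal (norm (complex_of_real (g z) * Aop a f z)) \<le> (\<integral>\<^sup>+ y. ennreal (norm (a z y) * \<bar>f y\<bar> * \<bar>g z\<bar>) \<partial>lborel)" for z
    proof -
      have "norm (Aop a f z) \<le> (\<integral>y. norm (a z y) * \<bar>f y\<bar> \<partial>lborel)"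
        unfolding Aop_def using integral_norm_bound[of lborel "\<lambda>y. a z y * complex_of_real (f y)"]
        by (simp add: norm_mult)
      hence "ennreal (norm (complex_of_real (g z) * Aop a f z)) \<le> ennreal (\<bar>g z\<bar> * (\<integral>y. norm (a z y) * \<bar>f y\<bar> \<partial>lborel))"
        by (intro ennreal_leI) (simp add: norm_mult mult_left_mono)
      also have "\<dots> = ennreal \<bar>g z\<bar> * ennreal (\<integral>y. norm (a z y) * \<bar>f y\<bar> \<partial>lborel)"
        by (simp add: ennreal_mult)
      also have "\<dots> \<le> ennreal \<bar>g z\<bar> * (\<integral>\<^sup>+ y. ennreal (norm (a z y) * \<bar>f y\<bar>) \<partial>lborel)"
        by (intro mult_left_mono enn_integral_le) auto
      also have "\<dots> = (\<integral>\<^sup>+ y. ennreal \<bar>g z\<bar> * ennreal (norm (a z y) * \<bar>f y\<bar>) \<partial>lborel)"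
        by (rule nn_integral_cmult[symmetric]) measurable
      also have "\<dots> = (\<integral>\<^sup>+ y. ennreal (norm (a z y) * \<bar>f y\<bar> * \<bar>g z\<bar>) \<partial>lborel)"
        by (intro nn_integral_cong) (simp add: ennreal_mult[symmetric] mult_ac)
      finally show ?thesis .
    qed
    have "norm (\<integral>z. complex_of_real (g z) * Aop a f z \<partial>lborel) \<le> (\<integral>z. norm (complex_of_real (g z) * Aop a f z) \<partial>lborel)"
      by (rule integral_norm_bound)
    also have "\<dots> \<le> max C 0 * L2norm f * L2norm g"
    proof (rule integral_real_bounded)
      show "0 \<le> max C 0 * L2norm f * L2norm g" by (simp add: L2norm_nonneg)
      have "(\<integral>\<^sup>+ z. ennreal (norm (complex_of_real (g z) * Aop a f z)) \<partial>lborel)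
          \<le> (\<integral>\<^sup>+ x. (\<integral>\<^sup>+ y. ennreal (norm (a x y) * \<bar>f y\<bar> * \<bar>g x\<bar>) \<partial>lborel) \<partial>lborel)"
        by (intro nn_integral_mono pt)
      also have "\<dots> \<le> ennreal (C * L2norm f * L2norm g)" by (rule C[OF f g])
      also have "\<dots> \<le> ennreal (max C 0 * L2norm f * L2norm g)"
        by (intro ennreal_leI mult_right_mono) (auto simp: L2norm_nonneg)
      finally show "(\<integral>\<^sup>+ z. ennreal (norm (complex_of_real (g z) * Aop a f z)) \<partial>lborel) \<le> ennreal (max C 0 * L2norm f * L2norm g)" .
    qed
    finally show ?thesis .
  qed
  thus ?thesis by (intro exI[of _ "max C 0"]) auto
qed

lemma nn_tail: assumes s: "s > 0"
  shows "(\<integral>\<^sup>+ l. ennreal (indicator {s..} l * (1 / l^2)) \<partial>lborel) = ennreal (1 / s)"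
proof -
  have "((\<lambda>l. 1 / l^2) has_integral 1 / (real (2 - 1) * s ^ (2 - 1))) {s..}"
    by (rule has_integral_inverse_power_to_inf) (use s in auto)
  hence "((\<lambda>l::real. 1 / l^2) has_integral 1 / s) {s..}" by simp
  hence "((\<lambda>l. if l \<in> {s..} then 1 / l^2 else 0) has_integral 1 / s) UNIV"
    by (simp only: has_integral_restrict_UNIV)
  moreover have "(\<lambda>l. if l \<in> {s..} then 1 / l^2 else 0) = (\<lambda>l::real. indicator {s..} l * (1 / l^2))"
    by (auto simp: indicator_def)
  ultimately have I: "((\<lambda>l::real. indicator {s..} l * (1 / l^2)) has_integral 1 / s) UNIV" by simp
  have "integral\<^sup>N lborel (\<lambda>l::real. indicator {s..} l * (1 / l^2)) = ennreal (1 / s)"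
    by (rule nn_integral_has_integral_lborel[OF _ _ I]) (auto simp: indicator_def)
  thus ?thesis by simp
qed

lemma nn_min: "(\<integral>\<^sup>+ l. ennreal (indicator {0<..} l * min \<bar>t\<bar> (1 / l^2)) \<partial>lborel) \<le> ennreal (2 * sqrt \<bar>t\<bar>)"
proof (cases "t = 0")
  case True thus ?thesis by simp
next
  case False
  define s where "s = 1 / sqrt \<bar>t\<bar>"
  have s: "s > 0" using False by (simp add: s_def)
  have pw: "ennreal (indicator {0<..} l * min \<bar>t\<bar> (1 / l^2))
      \<le> ennreal (\<bar>t\<bar> * indicator {0..s} l) + ennreal (indicator {s..} l * (1 / l^2))" for l :: real
  proof (cases "l \<le> 0")
    case True thus ?thesis by (simp add: indicator_def)
  next
    case False
    show ?thesis
    proof (cases "l \<le> s")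
      case True
      hence "indicator {0<..} l * min \<bar>t\<bar> (1 / l^2) \<le> \<bar>t\<bar> * indicator {0..s} l"
        using False by (simp add: indicator_def)
      hence "ennreal (indicator {0<..} l * min \<bar>t\<bar> (1 / l^2)) \<le> ennreal (\<bar>t\<bar> * indicator {0..s} l)"
        by (rule ennreal_leI)
      thus ?thesis by (rule order_trans) simp
    next
      case ls: False
      hence "indicator {0<..} l * min \<bar>t\<bar> (1 / l^2) \<le> indicator {s..} l * (1 / l^2)"
        using False by (simp add: indicator_def)
      hence "ennreal (indicator {0<..} l * min \<bar>t\<bar> (1 / l^2)) \<le> ennreal (indicator {s..} l * (1 / l^2))"
        by (rule ennreal_leI)
      thus ?thesis by (rule order_trans) simp
    qed
  qed
  have "(\<integral>\<^sup>+ l. ennreal (indicator {0<..} l * min \<bar>t\<bar> (1 / l^2)) \<partial>lborel)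
      \<le> (\<integral>\<^sup>+ l. ennreal (\<bar>t\<bar> * indicator {0..s} l) + ennreal (indicator {s..} l * (1 / l^2)) \<partial>lborel)"
    by (intro nn_integral_mono pw)
  also have "\<dots> = (\<integral>\<^sup>+ l. ennreal (\<bar>t\<bar> * indicator {0..s} l) \<partial>lborel) + (\<integral>\<^sup>+ l. ennreal (indicator {s..} l * (1 / l^2)) \<partial>lborel)"
    by (rule nn_integral_add) auto
  also have "(\<integral>\<^sup>+ l. ennreal (\<bar>t\<bar> * indicator {0..s} l) \<partial>lborel) = ennreal (\<bar>t\<bar> * s)"
  proof -
    have "(\<integral>\<^sup>+ l. ennreal (\<bar>t\<bar> * indicator {0..s} l) \<partial>lborel) = (\<integral>\<^sup>+ l. ennreal \<bar>t\<bar> * indicator {0..s} l \<partial>lborel)"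
      by (intro nn_integral_cong) (simp add: indicator_def)
    also have "\<dots> = ennreal \<bar>t\<bar> * emeasure lborel {0..s}" by (simp add: nn_integral_cmult_indicator)
    also have "\<dots> = ennreal (\<bar>t\<bar> * s)" using s by (simp add: ennreal_mult)
    finally show ?thesis .
  qed
  also have "(\<integral>\<^sup>+ l. ennreal (indicator {s..} l * (1 / l^2)) \<partial>lborel) = ennreal (1 / s)" by (rule nn_tail[OF s])
  also have "ennreal (\<bar>t\<bar> * s) + ennreal (1 / s) = ennreal (2 * sqrt \<bar>t\<bar>)"
  proof -
    have "\<bar>t\<bar> * s = sqrt \<bar>t\<bar>" using False unfolding s_def
      by (metis abs_ge_zero div_by_1 divide_divide_eq_right real_div_sqrt times_divide_eq_right)
    moreover have "1 / s = sqrt \<bar>t\<bar>" by (simp add: s_def)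
    ultimately show ?thesis using s by (simp add: ennreal_plus[symmetric])
  qed
  finally show ?thesis .
qed

lemma Kt_bound:
  fixes chi :: "real \<Rightarrow> real" and K :: complex
  assumes Bc: "\<And>l. \<bar>chi l\<bar> \<le> Bc"
  shows "norm (set_lebesgue_integral lborel {0<..} (\<lambda>l. complex_of_real (chi l * sin (t * l^2) / l^2) * K))
      \<le> Bc * norm K * (2 * sqrt \<bar>t\<bar>)"
proof -
  have Bc0: "0 \<le> Bc" using Bc[of 0] by linarith
  let ?\<psi> = "\<lambda>l. norm (indicator {0<..} l *\<^sub>R (complex_of_real (chi l * sin (t * l^2) / l^2) * K))"
  have "norm (set_lebesgue_integral lborel {0<..} (\<lambda>l. complex_of_real (chi l * sin (t * l^2) / l^2) * K))
      \<le> (\<integral>l. ?\<psi> l \<partial>lborel)"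
    unfolding set_lebesgue_integral_def by (rule integral_norm_bound)
  also have "\<dots> \<le> Bc * norm K * (2 * sqrt \<bar>t\<bar>)"
  proof (rule integral_real_bounded)
    show "0 \<le> Bc * norm K * (2 * sqrt \<bar>t\<bar>)" using Bc0 by simp
    have pw: "?\<psi> l \<le> (Bc * norm K) * (indicator {0<..} l * min \<bar>t\<bar> (1 / l^2))" for l :: real
    proof (cases "l > 0")
      case False thus ?thesis by (simp add: indicator_def)
    next
      case True
      have s1: "\<bar>sin (t * l^2)\<bar> / l^2 \<le> \<bar>t\<bar>"
        using abs_sin_x_le_abs_x[of "t * l^2"] True by (simp add: divide_le_eq abs_mult)
      have s2: "\<bar>sin (t * l^2)\<bar> / l^2 \<le> 1 / l^2"
        using abs_sin_le_one[of "t * l^2"] True by (simp add: divide_right_mono)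
      have "?\<psi> l = norm (complex_of_real (chi l * sin (t * l^2) / l^2) * K)"
        using True by (simp only: indicator_simps greaterThan_iff if_True scaleR_one)
      also have "\<dots> = \<bar>chi l * sin (t * l^2) / l^2\<bar> * norm K" by (simp only: norm_mult norm_of_real)
      also have "\<dots> = \<bar>chi l\<bar> * (\<bar>sin (t * l^2)\<bar> / l^2) * norm K" by (simp add: abs_mult abs_divide)
      finally have "?\<psi> l = \<bar>chi l\<bar> * (\<bar>sin (t * l^2)\<bar> / l^2) * norm K" .
      also have "\<dots> \<le> Bc * min \<bar>t\<bar> (1 / l^2) * norm K"
        using s1 s2 Bc[of l] by (intro mult_right_mono mult_mono) auto
      finally show ?thesis using True by (simp add: mult_ac)
    qed
    have "(\<integral>\<^sup>+ l. ennreal (?\<psi> l) \<partial>lborel) \<le> (\<integral>\<^sup>+ l. ennreal (Bc * norm K) * ennreal (indicator {0<..} l * min \<bar>t\<bar> (1 / l^2)) \<partial>lborel)"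
      by (intro nn_integral_mono) (use pw Bc0 in \<open>auto simp: ennreal_mult[symmetric] intro: ennreal_leI\<close>)
    also have "\<dots> = ennreal (Bc * norm K) * (\<integral>\<^sup>+ l. ennreal (indicator {0<..} l * min \<bar>t\<bar> (1 / l^2)) \<partial>lborel)"
      by (rule nn_integral_cmult) measurable
    also have "\<dots> \<le> ennreal (Bc * norm K) * ennreal (2 * sqrt \<bar>t\<bar>)"
      by (intro mult_left_mono nn_min) auto
    also have "\<dots> = ennreal (Bc * norm K * (2 * sqrt \<bar>t\<bar>))"
      using Bc0 by (simp add: ennreal_mult[symmetric])
    finally show "(\<integral>\<^sup>+ l. ennreal (?\<psi> l) \<partial>lborel) \<le> ennreal (Bc * norm K * (2 * sqrt \<bar>t\<bar>))" .
  qed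
  finally show ?thesis .
qed


lemma chi_bounded:
  fixes chi :: "real \<Rightarrow> real" and l0 :: real
  assumes d: "\<forall>n x. ((deriv ^^ n) chi) differentiable (at x)"
    and s: "\<forall>x. \<bar>x\<bar> > 2 * l0 \<longrightarrow> chi x = 0"
  shows "\<exists>B. \<forall>l. \<bar>chi l\<bar> \<le> B"
proof -
  have "chi differentiable (at x)" for x using d[rule_format, of 0 x] by simp
  hence "continuous_on {-2*l0..2*l0} chi"
    by (intro continuous_at_imp_continuous_on ballI differentiable_imp_continuous_within)
  hence "compact (chi ` {-2*l0..2*l0})" by (intro compact_continuous_image) auto
  hence "bounded (chi ` {-2*l0..2*l0})" by (rule compact_imp_bounded)
  then obtain B where B: "\<And>x. x \<in> chi ` {-2*l0..2*l0} \<Longrightarrow> \<bar>x\<bar> \<le> B" unfolding bounded_real by blast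
  have "\<bar>chi l\<bar> \<le> max B 0" for l
  proof (cases "\<bar>l\<bar> > 2 * l0")
    case True thus ?thesis using s by simp
  next
    case False
    hence "l \<in> {-2*l0..2*l0}" by auto
    thus ?thesis using B by force
  qed
  thus ?thesis by blast
qed

theorem proposition3p10:
  fixes V :: "pt \<Rightarrow> real" and a :: "pt \<Rightarrow> pt \<Rightarrow> complex"
    and chi :: "real \<Rightarrow> real" and l0 :: real
  assumes "V \<in> borel_measurable lborel"
    and "\<exists>\<epsilon>>0. \<exists>C. \<forall>x. \<bar>V x\<bar> \<le> C * (1 + norm x) powr (-19 - \<epsilon>)"
    and "abs_bounded a"
    and "\<forall>n x. ((deriv ^^ n) chi) differentiable (at x)"
    and "\<forall>x. chi (-x) = chi x"
    and "\<exists>\<delta>>0. \<forall>x. \<bar>x\<bar> < \<delta> \<longrightarrow> chi x = 1"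
    and "l0 > 0"
    and "\<forall>x. \<bar>x\<bar> > 2 * l0 \<longrightarrow> chi x = 0"
  shows "\<exists>C. \<forall>t x y. norm (Kt4 V a chi t x y) \<le> C * sqrt \<bar>t\<bar>"
proof -
  obtain CV where CV: "CV \<ge> 0" "\<And>x. \<bar>V x\<bar> * (1 + norm x)^4 \<le> CV * Wt x"
    using decay_to_Wt[OF assms(2)] by blast
  interpret D: decayV V CV using assms(1) CV by unfold_locales auto
  obtain Ca where Ca: "Ca \<ge> 0" "\<And>f g. f \<in> L2 \<Longrightarrow> g \<in> L2 \<Longrightarrow>
      norm (\<integral>z. complex_of_real (g z) * Aop a f z \<partial>lborel) \<le> Ca * L2norm f * L2norm g"
    using lead_bound[OF assms(3)] by blast
  obtain B where B: "\<And>l. \<bar>chi l\<bar> \<le> B" using chi_bounded[OF assms(4) assms(8)] by blast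
  have B0: "0 \<le> B" using B[of 0] by linarith
  have Mv0: "0 \<le> D.Mv" by (simp add: D.Mv_def L2norm_nonneg)
  have lk: "norm (leadKer V a x y) \<le> Ca * D.Mv * D.Mv" for x y
  proof -
    have e: "(\<lambda>w. vfun V w * G0 w y) = (\<lambda>w. G0 y w * vfun V w)"
      by (auto simp: G0_sym[of _ y] mult.commute)
    have s1: "S2 V (\<lambda>w. G0 x w * vfun V w) \<in> kerT1 V \<and> L2norm (S2 V (\<lambda>w. G0 x w * vfun V w)) \<le> D.Mv"
      by (rule D.S2_bound)
    have s2: "S2 V (\<lambda>w. G0 y w * vfun V w) \<in> kerT1 V \<and> L2norm (S2 V (\<lambda>w. G0 y w * vfun V w)) \<le> D.Mv"
      by (rule D.S2_bound)
    have "norm (leadKer V a x y) \<le> Ca * L2norm (S2 V (\<lambda>w. G0 y w * vfun V w)) * L2norm (S2 V (\<lambda>w. G0 x w * vfun V w))"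
      unfolding leadKer_def e using s1 s2 D.kerT1_L2 by (intro Ca(2)) auto
    also have "\<dots> \<le> Ca * D.Mv * D.Mv"
      using s1 s2 Ca(1) Mv0 by (intro mult_mono mult_left_mono) (auto simp: L2norm_nonneg)
    finally show ?thesis .
  qed
  have "norm (Kt4 V a chi t x y) \<le> (B * (Ca * D.Mv * D.Mv) * 2) * sqrt \<bar>t\<bar>" for t x y
  proof -
    have "norm (Kt4 V a chi t x y) \<le> B * norm (leadKer V a x y) * (2 * sqrt \<bar>t\<bar>)"
      unfolding Kt4_def by (rule Kt_bound[OF B])
    also have "\<dots> \<le> B * (Ca * D.Mv * D.Mv) * (2 * sqrt \<bar>t\<bar>)"
      using lk B0 by (intro mult_right_mono mult_left_mono) auto
    finally show ?thesis by (simp add: mult_ac)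
  qed
  thus ?thesis by blast
qed


end
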